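(* Let $\mathcal{U},\mathcal{Y}$ be Hilbert spaces, $\mathcal{F}$ a closed subspace of $\mathcal{U}$, and $\omega=\begin{pmatrix}\omega_1\\ \omega_2\end{pmatrix}:\mathcal{F}\to\mathcal{Y}\oplus\mathcal{U}$ a contraction. Define for $\lambda\in\mathbb{D}$ $\Phi_{2,1}(\lambda)=\Pi_{\mathcal{Y}}D_{\omega^*}+\lambda\omega_1\Pi_{\mathcal{F}}(I_{\mathcal{U}}-\lambda\omega_2\Pi_{\mathcal{F}})^{-1}\Pi_{\mathcal{U}}D_{\omega^*}$ (an operator from $\mathcal{D}_{\omega^*}$ to $\mathcal{Y}$) and $\Phi_{2,2}(\lambda)=\omega_1\Pi_{\mathcal{F}}(I_{\mathcal{U}}-\lambda\omega_2\Pi_{\mathcal{F}})^{-1}$. Then $\Gamma_{\Phi_{2,2}}:\mathcal{U}\to H^2(\mathcal{Y})$ is a co-isometry if and only if $\Phi_{2,1}(\lambda)=0$ for every $\lambda\in\mathbb{D}$.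
   Context: $\mathbb{D}$ is the open unit disc. $\Pi_{\mathcal{F}}:\mathcal{U}\to\mathcal{F}$ is the orthogonal projection; $D_{\omega^*}=(I-\omega\omega^* )^{1/2}$ on $\mathcal{Y}\oplus\mathcal{U}$, $\mathcal{D}_{\omega^*}$ is the closure of its range, and $\Pi_{\mathcal{Y}},\Pi_{\mathcal{U}}$ are the coordinate projections of $\mathcal{Y}\oplus\mathcal{U}$. $\Gamma_{\Phi_{2,2}}$ is defined by $(\Gamma_{\Phi_{2,2}}u)(\lambda)=\Phi_{2,2}(\lambda)u$, and is known to be a contraction into the Hardy space $H^2(\mathcal{Y})$. *)

theory Defs
  imports "HOL-Analysis.Analysis"
begin

text \<open>The distribution has no complex Hilbert spaces, so we introduce the class here.
  Convention: the inner product is conjugate-linear in the first, linear in the second argument.\<close>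

class cinner_space = real_normed_vector +
  fixes cscale :: "complex \<Rightarrow> 'a \<Rightarrow> 'a"
    and cinner :: "'a \<Rightarrow> 'a \<Rightarrow> complex"
  assumes cscale_add_right: "cscale a (x + y) = cscale a x + cscale a y"
    and cscale_add_left: "cscale (a + b) x = cscale a x + cscale b x"
    and cscale_cscale: "cscale a (cscale b x) = cscale (a * b) x"
    and cscale_one: "cscale 1 x = x"
    and scaleR_cscale: "scaleR r x = cscale (complex_of_real r) x"
    and cinner_commute: "cinner x y = cnj (cinner y x)"
    and cinner_add_right: "cinner x (y + z) = cinner x y + cinner x z"
    and cinner_cscale_right: "cinner x (cscale a y) = a * cinner x y"
    and cinner_norm: "cinner x x = complex_of_real ((norm x)\<^sup>2)"

class chilbert_space = cinner_space + complete_space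

definition closed_csubspace :: "'a::chilbert_space set \<Rightarrow> bool" where
  "closed_csubspace F \<longleftrightarrow> 0 \<in> F \<and> (\<forall>x\<in>F. \<forall>y\<in>F. x + y \<in> F)
      \<and> (\<forall>a. \<forall>x\<in>F. cscale a x \<in> F) \<and> closed F"

definition proj :: "'a::chilbert_space set \<Rightarrow> 'a \<Rightarrow> 'a" where
  "proj F x = (THE p. p \<in> F \<and> (\<forall>v\<in>F. cinner v (x - p) = 0))"

text \<open>\<open>\<omega> = (\<omega>1, \<omega>2) : F \<rightarrow> Y \<oplus> U\<close> is a (complex linear) contraction; only its values on F matter.\<close>
definition contraction_on :: "'u::chilbert_space set \<Rightarrow> ('u \<Rightarrow> 'y::chilbert_space) \<Rightarrow> ('u \<Rightarrow> 'u) \<Rightarrow> bool" where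
  "contraction_on F w1 w2 \<longleftrightarrow>
     (\<forall>x\<in>F. \<forall>y\<in>F. w1 (x + y) = w1 x + w1 y \<and> w2 (x + y) = w2 x + w2 y)
   \<and> (\<forall>a. \<forall>x\<in>F. w1 (cscale a x) = cscale a (w1 x) \<and> w2 (cscale a x) = cscale a (w2 x))
   \<and> (\<forall>x\<in>F. (norm (w1 x))\<^sup>2 + (norm (w2 x))\<^sup>2 \<le> (norm x)\<^sup>2)"

definition pscale :: "complex \<Rightarrow> 'y::chilbert_space \<times> 'u::chilbert_space \<Rightarrow> 'y \<times> 'u" where
  "pscale a p = (cscale a (fst p), cscale a (snd p))"

definition pinner :: "'y::chilbert_space \<times> 'u::chilbert_space \<Rightarrow> 'y \<times> 'u \<Rightarrow> complex" where
  "pinner p q = cinner (fst p) (fst q) + cinner (snd p) (snd q)"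

definition omega_adj :: "'u::chilbert_space set \<Rightarrow> ('u \<Rightarrow> 'y::chilbert_space) \<Rightarrow> ('u \<Rightarrow> 'u) \<Rightarrow> 'y \<times> 'u \<Rightarrow> 'u" where
  "omega_adj F w1 w2 p = (THE f. f \<in> F \<and> (\<forall>g\<in>F. cinner g f = cinner (w1 g) (fst p) + cinner (w2 g) (snd p)))"

definition positive_op :: "('y::chilbert_space \<times> 'u::chilbert_space \<Rightarrow> 'y \<times> 'u) \<Rightarrow> bool" where
  "positive_op D \<longleftrightarrow> bounded_linear D \<and> (\<forall>a p. D (pscale a p) = pscale a (D p))
      \<and> (\<forall>p. \<exists>r\<ge>0. pinner p (D p) = complex_of_real r)"

definition Dstar :: "'u::chilbert_space set \<Rightarrow> ('u \<Rightarrow> 'y::chilbert_space) \<Rightarrow> ('u \<Rightarrow> 'u) \<Rightarrow> 'y \<times> 'u \<Rightarrow> 'y \<times> 'u" where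
  "Dstar F w1 w2 = (THE D. positive_op D \<and>
      (\<forall>p. D (D p) = p - (w1 (omega_adj F w1 w2 p), w2 (omega_adj F w1 w2 p))))"

definition resolv :: "'u::chilbert_space set \<Rightarrow> ('u \<Rightarrow> 'u) \<Rightarrow> complex \<Rightarrow> 'u \<Rightarrow> 'u" where
  "resolv F w2 z = inv (\<lambda>x. x - cscale z (w2 (proj F x)))"

definition Phi21 :: "'u::chilbert_space set \<Rightarrow> ('u \<Rightarrow> 'y::chilbert_space) \<Rightarrow> ('u \<Rightarrow> 'u) \<Rightarrow> complex \<Rightarrow> 'y \<times> 'u \<Rightarrow> 'y" where
  "Phi21 F w1 w2 z p = fst (Dstar F w1 w2 p)
      + cscale z (w1 (proj F (resolv F w2 z (snd (Dstar F w1 w2 p)))))"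

definition Phi22 :: "'u::chilbert_space set \<Rightarrow> ('u \<Rightarrow> 'y::chilbert_space) \<Rightarrow> ('u \<Rightarrow> 'u) \<Rightarrow> complex \<Rightarrow> 'u \<Rightarrow> 'y" where
  "Phi22 F w1 w2 z u = w1 (proj F (resolv F w2 z u))"

text \<open>\<open>H^2(Y)\<close>: functions on the disc given by power series with square-summable coefficients;
  only values on the open unit disc matter.\<close>
definition H2 :: "(complex \<Rightarrow> 'y::chilbert_space) set" where
  "H2 = {f. \<exists>a. summable (\<lambda>n. (norm (a n))\<^sup>2) \<and>
                (\<forall>z\<in>ball 0 1. (\<lambda>n. cscale (z ^ n) (a n)) sums f z)}"

definition h2_coeffs :: "(complex \<Rightarrow> 'y::chilbert_space) \<Rightarrow> nat \<Rightarrow> 'y" where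
  "h2_coeffs f = (SOME a. \<forall>z\<in>ball 0 1. (\<lambda>n. cscale (z ^ n) (a n)) sums f z)"

definition h2_inner :: "(complex \<Rightarrow> 'y::chilbert_space) \<Rightarrow> (complex \<Rightarrow> 'y) \<Rightarrow> complex" where
  "h2_inner f g = (\<Sum>n. cinner (h2_coeffs f n) (h2_coeffs g n))"

text \<open>A map \<open>G : U \<rightarrow> H^2(Y)\<close> is a co-isometry: it maps into \<open>H^2(Y)\<close> and its adjoint
  \<open>S = G*\<close> satisfies \<open>G G* = I\<close> on \<open>H^2(Y)\<close> (equality of elements of \<open>H^2\<close> = equality on the disc).\<close>
definition h2_coisometry :: "('u::chilbert_space \<Rightarrow> complex \<Rightarrow> 'y::chilbert_space) \<Rightarrow> bool" where
  "h2_coisometry G \<longleftrightarrow> (\<forall>u. G u \<in> H2) \<and>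
     (\<exists>S. (\<forall>u. \<forall>f\<in>H2. h2_inner (G u) f = cinner u (S f)) \<and>
          (\<forall>f\<in>H2. \<forall>z\<in>ball 0 1. G (S f) z = f z))"

end

theory Submission
  imports Defs "HOL-Computational_Algebra.Formal_Power_Series"
begin


subclass (in chilbert_space) banach ..


lemma cinner_add_left: "cinner (x + y) z = cinner x z + cinner y z"
proof -
  have "cinner (x + y) z = cnj (cinner z (x + y))" by (rule cinner_commute)
  also have "\<dots> = cnj (cinner z x) + cnj (cinner z y)" by (simp add: cinner_add_right)
  also have "\<dots> = cinner x z + cinner y z" by (simp only: cinner_commute[of x z] cinner_commute[of y z])
  finally show ?thesis .
qed

lemma cinner_cscale_left: "cinner (cscale a x) y = cnj a * cinner x y"
proof -
  have "cinner (cscale a x) y = cnj (cinner y (cscale a x))" by (rule cinner_commute)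
  also have "\<dots> = cnj a * cnj (cinner y x)" by (simp add: cinner_cscale_right)
  also have "\<dots> = cnj a * cinner x y" by (simp only: cinner_commute[of x y])
  finally show ?thesis .
qed

lemma cinner_zero_right[simp]: "cinner x 0 = 0"
  using cinner_add_right[of x 0 0] by simp

lemma cinner_zero_left[simp]: "cinner 0 x = 0"
  using cinner_add_left[of 0 0 x] by simp



lemma cinner_scaleR_right: "cinner x (r *\<^sub>R y) = complex_of_real r * cinner x y"
  by (simp add: scaleR_cscale cinner_cscale_right)

lemma cinner_scaleR_left: "cinner (r *\<^sub>R x) y = complex_of_real r * cinner x y"
  by (simp add: scaleR_cscale cinner_cscale_left)

lemma cinner_minus_right: "cinner x (- y) = - cinner x y"
  using cinner_scaleR_right[of x "-1" y] by simp

lemma cinner_minus_left: "cinner (- x) y = - cinner x y"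
  using cinner_scaleR_left[of "-1" x y] by simp

lemma cinner_diff_right: "cinner x (y - z) = cinner x y - cinner x z"
  using cinner_add_right[of x y "-z"] cinner_minus_right by simp

lemma cinner_diff_left: "cinner (x - y) z = cinner x z - cinner y z"
  using cinner_add_left[of x "-y" z] cinner_minus_left by simp

lemma cinner_sum_right: "cinner x (sum f A) = (\<Sum>i\<in>A. cinner x (f i))"
  by (induction A rule: infinite_finite_induct) (auto simp: cinner_add_right)

lemma cinner_sum_left: "cinner (sum f A) x = (\<Sum>i\<in>A. cinner (f i) x)"
  by (induction A rule: infinite_finite_induct) (auto simp: cinner_add_left)

lemma cinner_self: "cinner x x = complex_of_real ((norm x)\<^sup>2)"
  by (rule cinner_norm)

lemma Re_cinner_self: "Re (cinner x x) = (norm x)\<^sup>2"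
  by (simp add: cinner_norm)

lemma Im_cinner_self: "Im (cinner x x) = 0"
  by (simp add: cinner_norm)

lemma cinner_self_eq_0: "cinner x x = 0 \<longleftrightarrow> x = 0"
  by (simp add: cinner_norm)

lemma cscale_zero_right[simp]: "cscale a 0 = 0"
  using cscale_add_right[of a 0 0] by simp

lemma cscale_zero_left[simp]: "cscale 0 x = 0"
  using cscale_add_left[of 0 0 x] by simp

lemma cscale_minus_right: "cscale a (- x) = - cscale a x"
proof -
  have "cscale a x + cscale a (- x) = 0" using cscale_add_right[of a x "-x"] by simp
  then show ?thesis by (rule add_eq_0_iff[THEN iffD1])
qed

lemma cscale_diff_right: "cscale a (x - y) = cscale a x - cscale a y"
  using cscale_add_right[of a x "-y"] cscale_minus_right by simp

lemma cscale_minus_left: "cscale (- a) x = - cscale a x"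
proof -
  have "cscale a x + cscale (- a) x = 0" using cscale_add_left[of a "-a" x] by simp
  then show ?thesis by (rule add_eq_0_iff[THEN iffD1])
qed

lemma cscale_sum_right: "cscale a (sum f A) = (\<Sum>i\<in>A. cscale a (f i))"
  by (induction A rule: infinite_finite_induct) (auto simp: cscale_add_right)

lemma cscale_scaleR: "cscale a (r *\<^sub>R x) = r *\<^sub>R cscale a x"
  by (simp add: scaleR_cscale cscale_cscale mult.commute)

lemma norm_cscale: "norm (cscale a x) = cmod a * norm x"
proof -
  have "complex_of_real ((norm (cscale a x))\<^sup>2) = cinner (cscale a x) (cscale a x)"
    by (rule cinner_norm[symmetric])
  also have "\<dots> = cnj a * a * cinner x x"
    by (simp add: cinner_cscale_left cinner_cscale_right)
  also have "\<dots> = cnj a * a * complex_of_real ((norm x)\<^sup>2)"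
    by (simp only: cinner_norm)
  also have "cnj a * a = complex_of_real ((cmod a)\<^sup>2)"
    by (simp only: complex_norm_square mult.commute[of "cnj a" a])
  finally have "(norm (cscale a x))\<^sup>2 = (cmod a * norm x)\<^sup>2"
    by (metis of_real_eq_iff of_real_mult power_mult_distrib)
  then show ?thesis
    by (simp add: power2_eq_iff_nonneg)
qed

lemma bounded_linear_cscale: "bounded_linear (cscale a)"
  by (rule bounded_linear_intro[where K="cmod a"]) (simp_all add: cscale_add_right cscale_scaleR norm_cscale mult.commute)



lemma norm_add_sq: "(norm (x + y))\<^sup>2 = (norm x)\<^sup>2 + (norm y)\<^sup>2 + 2 * Re (cinner x y)"
proof -
  have "complex_of_real ((norm (x + y))\<^sup>2) = cinner (x + y) (x + y)"
    by (rule cinner_norm[symmetric])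
  also have "\<dots> = cinner x x + cinner y y + (cinner x y + cinner y x)"
    by (simp add: cinner_add_left cinner_add_right)
  also have "cinner y x = cnj (cinner x y)" by (rule cinner_commute)
  finally have "complex_of_real ((norm (x + y))\<^sup>2) = cinner x x + cinner y y + (cinner x y + cnj (cinner x y))" .
  then have "(norm (x + y))\<^sup>2 = Re (cinner x x + cinner y y + (cinner x y + cnj (cinner x y)))"
    by (metis Re_complex_of_real)
  then show ?thesis by (simp add: Re_cinner_self)
qed

lemma norm_diff_sq: "(norm (x - y))\<^sup>2 = (norm x)\<^sup>2 + (norm y)\<^sup>2 - 2 * Re (cinner x y)"
  using norm_add_sq[of x "- y"] by (simp add: cinner_minus_right)

lemma cauchy_schwarz: "cmod (cinner x y) \<le> norm x * norm y"
proof (cases "y = 0")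
  case True then show ?thesis by simp
next
  case False
  define c where "c = cinner y x"
  define n where "n = (norm y)\<^sup>2"
  have n: "n > 0" using False by (simp add: n_def)
  define t where "t = c / complex_of_real n"
  have cxy: "cinner x y = cnj c" by (simp add: c_def cinner_commute[of x y])
  have 1: "(norm (x - cscale t y))\<^sup>2 = (norm x)\<^sup>2 + (cmod t)\<^sup>2 * n - 2 * Re (t * cinner x y)"
    by (simp add: norm_diff_sq norm_cscale cinner_cscale_right power_mult_distrib n_def)
  have 2: "t * cinner x y = complex_of_real ((cmod c)\<^sup>2 / n)"
    using complex_norm_square[of c] by (simp add: t_def cxy)
  have 3: "cmod t = cmod c / n" using n by (simp add: t_def norm_divide)
  have "0 \<le> (norm (x - cscale t y))\<^sup>2" by simp
  then have "0 \<le> (norm x)\<^sup>2 + (cmod c)\<^sup>2 / n - 2 * ((cmod c)\<^sup>2 / n)"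
    using n unfolding 1 2 3 by (simp add: power_divide power2_eq_square)
  then have "(cmod c)\<^sup>2 \<le> (norm x)\<^sup>2 * n" using n by (simp add: field_simps)
  then have "(cmod c)\<^sup>2 \<le> (norm x * norm y)\<^sup>2" by (simp add: n_def power_mult_distrib)
  then have "cmod c \<le> norm x * norm y"
    by (simp add: power2_le_iff_abs_le)
  then show ?thesis by (simp add: cxy)
qed

lemma bounded_linear_cinner_right: "bounded_linear (\<lambda>y. cinner x y)"
proof (rule bounded_linear_intro[where K="norm x"])
  fix y z show "cinner x (y + z) = cinner x y + cinner x z" by (rule cinner_add_right)
next
  fix r y show "cinner x (r *\<^sub>R y) = r *\<^sub>R cinner x y"
    by (simp add: cinner_scaleR_right scaleR_conv_of_real)
next
  fix y show "norm (cinner x y) \<le> norm y * norm x"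
    using cauchy_schwarz[of x y] by (simp add: mult.commute)
qed

lemma bounded_linear_cinner_left: "bounded_linear (\<lambda>x. cinner x y)"
proof (rule bounded_linear_intro[where K="norm y"])
  fix x z show "cinner (x + z) y = cinner x y + cinner z y" by (rule cinner_add_left)
next
  fix r x show "cinner (r *\<^sub>R x) y = r *\<^sub>R cinner x y"
    by (simp add: cinner_scaleR_left scaleR_conv_of_real)
next
  fix x show "norm (cinner x y) \<le> norm x * norm y"
    using cauchy_schwarz[of x y] by simp
qed


instantiation prod :: (chilbert_space, chilbert_space) cinner_space
begin

definition cscale_prod_def: "cscale a p = (cscale a (fst p), cscale a (snd p))"
definition cinner_prod_def: "cinner p q = cinner (fst p) (fst q) + cinner (snd p) (snd q)"

instance
proof
  fix a b :: complex and x y :: "'a \<times> 'b" and r :: real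
  show "cscale a (x + y) = cscale a x + cscale a y"
    by (simp add: cscale_prod_def cscale_add_right)
  show "cscale (a + b) x = cscale a x + cscale b x"
    by (simp add: cscale_prod_def cscale_add_left)
  show "cscale a (cscale b x) = cscale (a * b) x"
    by (simp add: cscale_prod_def cscale_cscale)
  show "cscale 1 x = x"
    by (simp add: cscale_prod_def cscale_one)
  show "r *\<^sub>R x = cscale (complex_of_real r) x"
    by (simp add: cscale_prod_def scaleR_cscale prod_eq_iff)
  show "cinner x y = cnj (cinner y x)"
    by (simp add: cinner_prod_def cinner_commute[of "fst x"] cinner_commute[of "snd x"])
  fix z :: "'a \<times> 'b"
  show "cinner x (y + z) = cinner x y + cinner x z"
    by (simp add: cinner_prod_def cinner_add_right)
  show "cinner x (cscale a y) = a * cinner x y"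
    by (simp add: cinner_prod_def cscale_prod_def cinner_cscale_right algebra_simps)
  show "cinner x x = complex_of_real ((norm x)\<^sup>2)"
    by (simp add: cinner_prod_def norm_prod_def cinner_norm)
qed

end

instance prod :: (chilbert_space, chilbert_space) chilbert_space ..

lemma pscale_eq: "pscale = cscale"
  by (auto simp: fun_eq_iff pscale_def cscale_prod_def)

lemma pinner_eq: "pinner = cinner"
  by (auto simp: fun_eq_iff pinner_def cinner_prod_def)

lemma cinner_Pair: "cinner (a, b) (c, d) = cinner a c + cinner b d"
  by (simp add: cinner_prod_def)

lemma cscale_Pair: "cscale z (a, b) = (cscale z a, cscale z b)"
  by (simp add: cscale_prod_def)

lemma csub_0: "closed_csubspace F \<Longrightarrow> 0 \<in> F"
  by (simp add: closed_csubspace_def)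
lemma csub_add: "closed_csubspace F \<Longrightarrow> x \<in> F \<Longrightarrow> y \<in> F \<Longrightarrow> x + y \<in> F"
  by (simp add: closed_csubspace_def)
lemma csub_cscale: "closed_csubspace F \<Longrightarrow> x \<in> F \<Longrightarrow> cscale a x \<in> F"
  by (simp add: closed_csubspace_def)
lemma csub_closed: "closed_csubspace F \<Longrightarrow> closed F"
  by (simp add: closed_csubspace_def)
lemma csub_scaleR: "closed_csubspace F \<Longrightarrow> x \<in> F \<Longrightarrow> r *\<^sub>R x \<in> F"
  by (simp add: scaleR_cscale csub_cscale)
lemma csub_minus: "closed_csubspace F \<Longrightarrow> x \<in> F \<Longrightarrow> - x \<in> F"
  using csub_scaleR[of F x "-1"] by simp
lemma csub_diff: "closed_csubspace F \<Longrightarrow> x \<in> F \<Longrightarrow> y \<in> F \<Longrightarrow> x - y \<in> F"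
  using csub_add[of F x "- y"] csub_minus[of F y] by simp

section \<open>Riesz representation on a closed subspace\<close>

lemma quad_nonneg_coeff:
  fixes a b :: real
  assumes "\<And>t. 0 \<le> a * t + b * t\<^sup>2" and "0 \<le> b"
  shows "a = 0"
proof -
  have "0 \<le> a * (- a / (b + 1)) + b * (- a / (b + 1))\<^sup>2" by (rule assms(1))
  also have "\<dots> = - a\<^sup>2 / (b + 1)\<^sup>2"
  proof -
    have "b + 1 \<noteq> 0" using assms(2) by simp
    then show ?thesis by (simp add: divide_simps power2_eq_square; algebra)
  qed
  finally have "a\<^sup>2 / (b + 1)\<^sup>2 \<le> 0" by simp
  moreover have "(b + 1)\<^sup>2 > 0" using assms(2) by simp
  ultimately have "a\<^sup>2 \<le> 0" by (simp add: divide_le_0_iff)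
  then show ?thesis by simp
qed

lemma riesz:
  fixes F :: "'a::chilbert_space set" and L :: "'a \<Rightarrow> complex"
  assumes F: "closed_csubspace F"
    and add: "\<And>g h. g \<in> F \<Longrightarrow> h \<in> F \<Longrightarrow> L (g + h) = L g + L h"
    and sc: "\<And>a g. g \<in> F \<Longrightarrow> L (cscale a g) = cnj a * L g"
    and bd: "\<And>g. g \<in> F \<Longrightarrow> cmod (L g) \<le> M * norm g"
  shows "\<exists>!m. m \<in> F \<and> (\<forall>g\<in>F. cinner g m = L g)"
proof (rule ex_ex1I)
  define B where "B = \<bar>M\<bar>"
  have B0: "0 \<le> B" by (simp add: B_def)
  have bdB: "cmod (L g) \<le> B * norm g" if "g \<in> F" for g
    using bd[OF that] by (simp add: B_def) (meson abs_ge_self mult_right_mono norm_ge_zero order_trans)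
  have Lr: "L (r *\<^sub>R g) = complex_of_real r * L g" if "g \<in> F" for r g
    using sc[OF that, of "complex_of_real r"] by (simp add: scaleR_cscale)
  have Ldiff: "L (g - h) = L g - L h" if "g \<in> F" "h \<in> F" for g h
  proof -
    have "L g = L ((g - h) + h)" by simp
    also have "\<dots> = L (g - h) + L h" using add csub_diff[OF F that] that(2) by blast
    finally show ?thesis by simp
  qed
  have F0: "0 \<in> F" using F by (rule csub_0)
  define J where "J g = (norm g)\<^sup>2 - 2 * Re (L g)" for g
  have Jlow: "- B\<^sup>2 \<le> J g" if "g \<in> F" for g
  proof -
    have "Re (L g) \<le> B * norm g" using bdB[OF that] complex_Re_le_cmod order_trans by blast
    moreover have "0 \<le> (norm g - B)\<^sup>2" by simp
    ultimately show ?thesis unfolding J_def by (simp add: power2_diff algebra_simps)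
  qed
  define I where "I = Inf (J ` F)"
  have bdd: "bdd_below (J ` F)" by (rule bdd_belowI2[where m="- B\<^sup>2"]) (rule Jlow)
  have IJ: "I \<le> J g" if "g \<in> F" for g
    unfolding I_def using bdd that by (simp add: cInf_lower)
  have "\<exists>g\<in>F. J g < I + inverse (real (Suc n))" for n
  proof -
    have "Inf (J ` F) < I + inverse (real (Suc n))" by (simp add: I_def)
    then obtain x where "x \<in> J ` F" "x < I + inverse (real (Suc n))"
      using cInf_lessD[of "J ` F"] F0 by blast
    then show ?thesis by blast
  qed
  then obtain s where sF: "\<And>n. s n \<in> F" and sJ: "\<And>n. J (s n) < I + inverse (real (Suc n))"
    by metis
  have para: "(norm (a - b))\<^sup>2 \<le> 2 * (J a - I) + 2 * (J b - I)" if ab: "a \<in> F" "b \<in> F" for a b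
  proof -
    define c where "c = (1/2::real) *\<^sub>R (a + b)"
    have cF: "c \<in> F" unfolding c_def by (intro csub_scaleR[OF F] csub_add[OF F] ab)
    have Lc: "L c = complex_of_real (1/2) * (L a + L b)"
      unfolding c_def using Lr add ab csub_add[OF F ab] by simp
    have nc: "(norm c)\<^sup>2 = (norm (a + b))\<^sup>2 / 4"
      by (simp add: c_def power_mult_distrib power_divide)
    have pl: "(norm (a + b))\<^sup>2 + (norm (a - b))\<^sup>2 = 2 * (norm a)\<^sup>2 + 2 * (norm b)\<^sup>2"
      by (simp add: norm_add_sq norm_diff_sq)
    have "J c = (norm (a + b))\<^sup>2 / 4 - Re (L a) - Re (L b)"
      unfolding J_def nc Lc by (simp add: field_simps)
    moreover have "I \<le> J c" using IJ cF by blast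
    ultimately show ?thesis using pl unfolding J_def by simp
  qed
  have Cs: "Cauchy s"
  proof (rule metric_CauchyI)
    fix e :: real assume e: "0 < e"
    obtain N :: nat where N: "4 / e\<^sup>2 < real N" using reals_Archimedean2 by blast
    have "\<forall>m\<ge>N. \<forall>n\<ge>N. dist (s m) (s n) < e"
    proof (intro allI impI)
      fix m n assume mn: "N \<le> m" "N \<le> n"
      have im: "inverse (real (Suc m)) \<le> inverse (real (Suc N))" using mn
        by (simp add: le_imp_inverse_le)
      have in': "inverse (real (Suc n)) \<le> inverse (real (Suc N))" using mn
        by (simp add: le_imp_inverse_le)
      have "(norm (s m - s n))\<^sup>2 \<le> 2 * (J (s m) - I) + 2 * (J (s n) - I)"
        using para sF by blast
      also have "\<dots> < 4 * inverse (real (Suc N))"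
      proof -
        have X: "a < I + x \<Longrightarrow> b < I + y \<Longrightarrow> x \<le> z \<Longrightarrow> y \<le> z \<Longrightarrow> 2 * (a - I) + 2 * (b - I) < 4 * z"
          for a b x y z :: real by argo
        show ?thesis by (rule X[OF sJ[of m] sJ[of n] im in'])
      qed
      also have "\<dots> \<le> e\<^sup>2"
      proof -
        have "4 / e\<^sup>2 < real (Suc N)" using N by simp
        then have "4 < e\<^sup>2 * real (Suc N)" using e by (simp add: field_simps)
        then show ?thesis using e by (simp add: field_simps)
      qed
      finally have "(norm (s m - s n))\<^sup>2 < e\<^sup>2" .
      then have "norm (s m - s n) < e" using e by (simp add: power_less_imp_less_base)
      then show "dist (s m) (s n) < e" by (simp add: dist_norm)
    qed
    then show "\<exists>N. \<forall>m\<ge>N. \<forall>n\<ge>N. dist (s m) (s n) < e" by blast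
  qed
  then obtain m0 where lim: "s \<longlonglongrightarrow> m0" using Cauchy_convergent_iff convergent_def by blast
  have m0F: "m0 \<in> F" using closed_sequentially[OF csub_closed[OF F]] sF lim by blast
  have "(\<lambda>n. s n - m0) \<longlonglongrightarrow> 0" using lim by (simp add: LIM_zero)
  then have "(\<lambda>n. L (s n) - L m0) \<longlonglongrightarrow> 0"
  proof (rule tendsto_0_le[where K=B])
    show "\<forall>\<^sub>F n in sequentially. norm (L (s n) - L m0) \<le> norm (s n - m0) * B"
    proof (rule always_eventually, rule allI)
      fix n
      have "cmod (L (s n) - L m0) = cmod (L (s n - m0))" using Ldiff[OF sF m0F] by simp
      also have "\<dots> \<le> B * norm (s n - m0)" by (rule bdB[OF csub_diff[OF F sF m0F]])
      finally show "norm (L (s n) - L m0) \<le> norm (s n - m0) * B" by (simp add: mult.commute)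
    qed
  qed
  then have "(\<lambda>n. L (s n)) \<longlonglongrightarrow> L m0" by (simp add: LIM_zero_iff)
  then have "(\<lambda>n. J (s n)) \<longlonglongrightarrow> J m0"
    unfolding J_def by (intro tendsto_intros lim)
  moreover have "(\<lambda>n. I + inverse (real (Suc n))) \<longlonglongrightarrow> I + 0"
    by (intro tendsto_intros LIMSEQ_inverse_real_of_nat)
  ultimately have "J m0 \<le> I"
    using sJ by (intro LIMSEQ_le[of "\<lambda>n. J (s n)" _ "\<lambda>n. I + inverse (real (Suc n))"]) (auto intro: less_imp_le)
  then have minJ: "J m0 \<le> J g" if "g \<in> F" for g using IJ[OF that] by simp
  have reeq: "Re (cinner h m0) = Re (L h)" if hF: "h \<in> F" for h
  proof -
    have "0 \<le> (2 * Re (cinner m0 h) - 2 * Re (L h)) * t + (norm h)\<^sup>2 * t\<^sup>2" for t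
    proof -
      have tF: "m0 + t *\<^sub>R h \<in> F" by (intro csub_add[OF F] csub_scaleR[OF F] m0F hF)
      have "J m0 \<le> J (m0 + t *\<^sub>R h)" by (rule minJ[OF tF])
      moreover have "L (m0 + t *\<^sub>R h) = L m0 + complex_of_real t * L h"
        using add[OF m0F csub_scaleR[OF F hF]] Lr[OF hF] by simp
      ultimately show ?thesis
        unfolding J_def by (simp add: norm_add_sq cinner_scaleR_right power_mult_distrib algebra_simps)
    qed
    then have "2 * Re (cinner m0 h) - 2 * Re (L h) = 0"
      by (intro quad_nonneg_coeff[of _ "(norm h)\<^sup>2"]) auto
    moreover have "Re (cinner h m0) = Re (cinner m0 h)"
      by (subst cinner_commute) simp
    ultimately show ?thesis by simp
  qed
  show "\<exists>m. m \<in> F \<and> (\<forall>g\<in>F. cinner g m = L g)"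
  proof (intro exI conjI ballI)
    show "m0 \<in> F" by (rule m0F)
    fix g assume gF: "g \<in> F"
    have 1: "Re (cinner g m0) = Re (L g)" by (rule reeq[OF gF])
    have "Re (cinner (cscale \<i> g) m0) = Re (L (cscale \<i> g))"
      by (rule reeq[OF csub_cscale[OF F gF]])
    then have 2: "Im (cinner g m0) = Im (L g)"
      by (simp add: cinner_cscale_left sc[OF gF])
    show "cinner g m0 = L g" using 1 2 by (simp add: complex_eq_iff)
  qed
next
  fix m m' assume m: "m \<in> F \<and> (\<forall>g\<in>F. cinner g m = L g)" and m': "m' \<in> F \<and> (\<forall>g\<in>F. cinner g m' = L g)"
  have dF: "m - m' \<in> F" using m m' csub_diff[OF F] by blast
  have "cinner (m - m') (m - m') = cinner (m - m') m - cinner (m - m') m'"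
    by (rule cinner_diff_right)
  also have "\<dots> = 0" using m m' dF by simp
  finally show "m = m'" by (simp add: cinner_self_eq_0)
qed


section \<open>Orthogonal projection\<close>

lemma sq_le1: "(x::real)\<^sup>2 = a\<^sup>2 + b\<^sup>2 \<Longrightarrow> 0 \<le> a \<Longrightarrow> 0 \<le> x \<Longrightarrow> a \<le> x"
  by (metis real_sqrt_sum_squares_ge1 real_sqrt_unique)
lemma sq_le2: "(a::real)\<^sup>2 + b\<^sup>2 \<le> x\<^sup>2 \<Longrightarrow> 0 \<le> a \<Longrightarrow> 0 \<le> x \<Longrightarrow> a \<le> x"
  by (smt (verit) power2_le_imp_le zero_le_power2)
lemma sq_le3: "(a::real)\<^sup>2 + b\<^sup>2 \<le> x\<^sup>2 \<Longrightarrow> 0 \<le> x \<Longrightarrow> sqrt (a\<^sup>2 + b\<^sup>2) \<le> x"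
  using real_le_lsqrt by simp
lemma sq_le4: "(n::real)\<^sup>2 \<le> n * m \<Longrightarrow> 0 \<le> n \<Longrightarrow> 0 \<le> m \<Longrightarrow> n \<le> m"
  by (metis mult_cancel_left mult_left_mono nle_le power2_eq_square)

lemma proj_ex1:
  assumes F: "closed_csubspace F"
  shows "\<exists>!p. p \<in> F \<and> (\<forall>v\<in>F. cinner v (x - p) = 0)"
proof -
  have "\<exists>!m. m \<in> F \<and> (\<forall>g\<in>F. cinner g m = cinner g x)"
  proof (rule riesz[OF F, where M="norm x"])
    show "cinner (g + h) x = cinner g x + cinner h x" for g h by (rule cinner_add_left)
    show "cinner (cscale a g) x = cnj a * cinner g x" for a g by (rule cinner_cscale_left)
    show "cmod (cinner g x) \<le> norm x * norm g" for g using cauchy_schwarz[of g x] by (simp add: mult.commute)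
  qed
  moreover have "(p \<in> F \<and> (\<forall>v\<in>F. cinner v (x - p) = 0)) \<longleftrightarrow> (p \<in> F \<and> (\<forall>g\<in>F. cinner g p = cinner g x))" for p
    by (auto simp: cinner_diff_right)
  ultimately show ?thesis by simp
qed

lemma proj_in: "closed_csubspace F \<Longrightarrow> proj F x \<in> F"
  unfolding proj_def using theI'[OF proj_ex1] by blast

lemma proj_orth: "closed_csubspace F \<Longrightarrow> v \<in> F \<Longrightarrow> cinner v (x - proj F x) = 0"
  unfolding proj_def using theI'[OF proj_ex1] by blast

lemma proj_orth': "closed_csubspace F \<Longrightarrow> v \<in> F \<Longrightarrow> cinner (x - proj F x) v = 0"
  using proj_orth[of F v x] by (subst cinner_commute) simp

lemma proj_inner: "closed_csubspace F \<Longrightarrow> v \<in> F \<Longrightarrow> cinner v (proj F x) = cinner v x"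
  using proj_orth[of F v x] by (simp add: cinner_diff_right)

lemma proj_unique: "closed_csubspace F \<Longrightarrow> p \<in> F \<Longrightarrow> (\<And>v. v \<in> F \<Longrightarrow> cinner v (x - p) = 0) \<Longrightarrow> proj F x = p"
  unfolding proj_def by (rule the1_equality[OF proj_ex1]) auto

lemma proj_id: "closed_csubspace F \<Longrightarrow> x \<in> F \<Longrightarrow> proj F x = x"
  by (rule proj_unique) auto

lemma proj_add: "closed_csubspace F \<Longrightarrow> proj F (x + y) = proj F x + proj F y"
  by (rule proj_unique) (auto simp: csub_add proj_in cinner_diff_right cinner_add_right proj_inner)

lemma proj_cscale: "closed_csubspace F \<Longrightarrow> proj F (cscale a x) = cscale a (proj F x)"
  by (rule proj_unique) (auto simp: csub_cscale proj_in cinner_diff_right cinner_cscale_right proj_inner)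

lemma proj_scaleR: "closed_csubspace F \<Longrightarrow> proj F (r *\<^sub>R x) = r *\<^sub>R (proj F x)"
  by (simp add: scaleR_cscale proj_cscale)

lemma proj_norm_sq: "closed_csubspace F \<Longrightarrow> (norm x)\<^sup>2 = (norm (proj F x))\<^sup>2 + (norm (x - proj F x))\<^sup>2"
  using norm_add_sq[of "proj F x" "x - proj F x"] proj_orth[of F "proj F x" x] proj_in[of F x] by simp

lemma proj_norm: "closed_csubspace F \<Longrightarrow> norm (proj F x) \<le> norm x"
  using proj_norm_sq[of F x] by (rule sq_le1[of _ _ "norm (x - proj F x)"]) auto

lemma bounded_linear_proj: "closed_csubspace F \<Longrightarrow> bounded_linear (proj F)"
  by (rule bounded_linear_intro[where K=1]) (auto simp: proj_add proj_scaleR proj_norm)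

locale omg =
  fixes F :: "'u::chilbert_space set" and w1 :: "'u \<Rightarrow> 'y::chilbert_space" and w2 :: "'u \<Rightarrow> 'u"
  assumes F: "closed_csubspace F" and contr: "contraction_on F w1 w2"
begin

lemma w1_add: "x \<in> F \<Longrightarrow> y \<in> F \<Longrightarrow> w1 (x + y) = w1 x + w1 y"
  using contr by (simp add: contraction_on_def)
lemma w2_add: "x \<in> F \<Longrightarrow> y \<in> F \<Longrightarrow> w2 (x + y) = w2 x + w2 y"
  using contr by (simp add: contraction_on_def)
lemma w1_cscale: "x \<in> F \<Longrightarrow> w1 (cscale a x) = cscale a (w1 x)"
  using contr by (simp add: contraction_on_def)
lemma w2_cscale: "x \<in> F \<Longrightarrow> w2 (cscale a x) = cscale a (w2 x)"
  using contr by (simp add: contraction_on_def)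
lemma w_norm: "x \<in> F \<Longrightarrow> (norm (w1 x))\<^sup>2 + (norm (w2 x))\<^sup>2 \<le> (norm x)\<^sup>2"
  using contr by (simp add: contraction_on_def)
lemma w1_norm: assumes "x \<in> F" shows "norm (w1 x) \<le> norm x"
  by (rule sq_le2[of _ "norm (w2 x)"]) (use w_norm[OF assms] in auto)
lemma w2_norm: assumes "x \<in> F" shows "norm (w2 x) \<le> norm x"
  by (rule sq_le2[of _ "norm (w1 x)"]) (use w_norm[OF assms] in \<open>auto simp: add.commute\<close>)
lemma w_pair_norm: assumes "x \<in> F" shows "norm (w1 x, w2 x) \<le> norm x"
  unfolding norm_prod_def fst_conv snd_conv by (rule sq_le3) (use w_norm[OF assms] in auto)

abbreviation "P \<equiv> proj F"
abbreviation "Ws \<equiv> omega_adj F w1 w2"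

lemma Ws_ex1: "\<exists>!f. f \<in> F \<and> (\<forall>g\<in>F. cinner g f = cinner (w1 g) (fst p) + cinner (w2 g) (snd p))"
proof (rule riesz[OF F, where M="norm p"])
  fix g h assume "g \<in> F" "h \<in> F"
  then show "cinner (w1 (g + h)) (fst p) + cinner (w2 (g + h)) (snd p)
     = cinner (w1 g) (fst p) + cinner (w2 g) (snd p) + (cinner (w1 h) (fst p) + cinner (w2 h) (snd p))"
    by (simp add: w1_add w2_add cinner_add_left)
next
  fix a g assume "g \<in> F"
  then show "cinner (w1 (cscale a g)) (fst p) + cinner (w2 (cscale a g)) (snd p)
     = cnj a * (cinner (w1 g) (fst p) + cinner (w2 g) (snd p))"
    by (simp add: w1_cscale w2_cscale cinner_cscale_left algebra_simps)
next
  fix g assume g: "g \<in> F"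
  have "cinner (w1 g) (fst p) + cinner (w2 g) (snd p) = cinner (w1 g, w2 g) p"
    by (simp add: cinner_prod_def)
  also have "cmod \<dots> \<le> norm (w1 g, w2 g) * norm p" by (rule cauchy_schwarz)
  also have "\<dots> \<le> norm g * norm p" using w_pair_norm[OF g] by (simp add: mult_right_mono)
  finally show "cmod (cinner (w1 g) (fst p) + cinner (w2 g) (snd p)) \<le> norm p * norm g"
    by (simp add: mult.commute)
qed

lemma Ws_in: "Ws p \<in> F"
  unfolding omega_adj_def using theI'[OF Ws_ex1] by blast

lemma Ws_char: "g \<in> F \<Longrightarrow> cinner g (Ws p) = cinner (w1 g) (fst p) + cinner (w2 g) (snd p)"
  unfolding omega_adj_def using theI'[OF Ws_ex1, of p] by blast

lemma Ws_char': "g \<in> F \<Longrightarrow> cinner g (Ws p) = cinner (w1 g, w2 g) p"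
  by (simp add: Ws_char cinner_prod_def)

lemma Ws_unique: "f \<in> F \<Longrightarrow> (\<And>g. g \<in> F \<Longrightarrow> cinner g f = cinner (w1 g) (fst p) + cinner (w2 g) (snd p)) \<Longrightarrow> Ws p = f"
  unfolding omega_adj_def by (rule the1_equality[OF Ws_ex1]) auto

lemma Ws_add: "Ws (p + q) = Ws p + Ws q"
  by (rule Ws_unique) (auto simp: csub_add[OF F] Ws_in cinner_add_right Ws_char)

lemma Ws_cscale: "Ws (cscale a p) = cscale a (Ws p)"
  by (rule Ws_unique) (auto simp: csub_cscale[OF F] Ws_in cinner_cscale_right Ws_char cscale_prod_def algebra_simps)

lemma Ws_scaleR: "Ws (r *\<^sub>R p) = r *\<^sub>R Ws p"
  by (simp add: scaleR_cscale Ws_cscale)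

lemma Ws_norm: "norm (Ws p) \<le> norm p"
proof -
  have "complex_of_real ((norm (Ws p))\<^sup>2) = cinner (Ws p) (Ws p)" by (simp add: cinner_norm)
  also have "\<dots> = cinner (w1 (Ws p), w2 (Ws p)) p" by (rule Ws_char'[OF Ws_in])
  finally have "(norm (Ws p))\<^sup>2 = cmod (cinner (w1 (Ws p), w2 (Ws p)) p)"
    by (metis norm_of_real abs_of_nonneg zero_le_power2)
  then have "(norm (Ws p))\<^sup>2 \<le> norm (w1 (Ws p), w2 (Ws p)) * norm p"
    using cauchy_schwarz[of "(w1 (Ws p), w2 (Ws p))" p] by simp
  also have "\<dots> \<le> norm (Ws p) * norm p" using w_pair_norm[OF Ws_in] by (simp add: mult_right_mono)
  finally show ?thesis by (rule sq_le4) auto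
qed

lemma bounded_linear_Ws: "bounded_linear Ws"
  by (rule bounded_linear_intro[where K=1]) (auto simp: Ws_add Ws_scaleR Ws_norm)

end


section \<open>Cauchy product for bounded bilinear maps\<close>

lemma bilinear_Cauchy_product_sums:
  fixes a :: "nat \<Rightarrow> 'a::banach" and b :: "nat \<Rightarrow> 'b::banach" and prod :: "'a \<Rightarrow> 'b \<Rightarrow> 'c::banach"
  assumes bl: "bounded_bilinear prod"
    and a: "summable (\<lambda>k. norm (a k))"
    and b: "summable (\<lambda>k. norm (b k))"
  shows "(\<lambda>k. \<Sum>i\<le>k. prod (a i) (b (k - i))) sums (prod (\<Sum>k. a k) (\<Sum>k. b k))"
proof -
  obtain K where K: "K > 0" "\<And>x y. norm (prod x y) \<le> norm x * norm y * K"
    using bounded_bilinear.pos_bounded[OF bl] by blast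
  let ?S1 = "\<lambda>n::nat. {..<n} \<times> {..<n}"
  let ?S2 = "\<lambda>n::nat. {(i,j). i + j < n}"
  have S1_mono: "\<And>m n. m \<le> n \<Longrightarrow> ?S1 m \<subseteq> ?S1 n" by auto
  have S2_le_S1: "\<And>n. ?S2 n \<subseteq> ?S1 n" by auto
  have S1_le_S2: "\<And>n. ?S1 (n div 2) \<subseteq> ?S2 n" by auto
  have finite_S1: "\<And>n. finite (?S1 n)" by simp
  with S2_le_S1 have finite_S2: "\<And>n. finite (?S2 n)" by (rule finite_subset)
  let ?g = "\<lambda>(i,j). prod (a i) (b j)"
  let ?f = "\<lambda>(i,j). norm (a i) * norm (b j) * K"
  have f_nonneg: "\<And>x. 0 \<le> ?f x" using K by auto
  then have norm_sum_f: "\<And>A. norm (sum ?f A) = sum ?f A"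
    unfolding real_norm_def
    by (simp only: abs_of_nonneg sum_nonneg [rule_format])
  have prodsum: "prod (\<Sum>k<n. a k) (\<Sum>k<n. b k) = sum ?g (?S1 n)" for n
  proof -
    have "prod (\<Sum>k<n. a k) (\<Sum>k<n. b k) = (\<Sum>i<n. \<Sum>j<n. prod (a i) (b j))"
      by (simp only: bounded_bilinear.sum_left[OF bl] bounded_bilinear.sum_right[OF bl]) (rule sum.swap)
    also have "\<dots> = sum ?g (?S1 n)" by (rule sum.cartesian_product)
    finally show ?thesis .
  qed
  have "(\<lambda>n. prod (\<Sum>k<n. a k) (\<Sum>k<n. b k)) \<longlonglongrightarrow> prod (\<Sum>k. a k) (\<Sum>k. b k)"
    by (intro bounded_bilinear.tendsto[OF bl] summable_LIMSEQ summable_norm_cancel [OF a] summable_norm_cancel [OF b])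
  then have 1: "(\<lambda>n. sum ?g (?S1 n)) \<longlonglongrightarrow> prod (\<Sum>k. a k) (\<Sum>k. b k)"
    by (simp only: prodsum)
  have fsum: "(\<Sum>k<n. norm (a k)) * (\<Sum>k<n. norm (b k)) * K = sum ?f (?S1 n)" for n
  proof -
    have "(\<Sum>k<n. norm (a k)) * (\<Sum>k<n. norm (b k)) * K = (\<Sum>i<n. \<Sum>j<n. norm (a i) * norm (b j) * K)"
      by (simp add: sum_distrib_left sum_distrib_right mult.assoc) (rule sum.swap)
    also have "\<dots> = sum ?f (?S1 n)" by (rule sum.cartesian_product)
    finally show ?thesis .
  qed
  have "(\<lambda>n. (\<Sum>k<n. norm (a k)) * (\<Sum>k<n. norm (b k)) * K) \<longlonglongrightarrow> (\<Sum>k. norm (a k)) * (\<Sum>k. norm (b k)) * K"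
    using a b by (intro tendsto_mult summable_LIMSEQ tendsto_const)
  then have "(\<lambda>n. sum ?f (?S1 n)) \<longlonglongrightarrow> (\<Sum>k. norm (a k)) * (\<Sum>k. norm (b k)) * K"
    by (simp only: fsum)
  then have "convergent (\<lambda>n. sum ?f (?S1 n))"
    by (rule convergentI)
  then have Cauchy: "Cauchy (\<lambda>n. sum ?f (?S1 n))"
    by (rule convergent_Cauchy)
  have "Zfun (\<lambda>n. sum ?f (?S1 n - ?S2 n)) sequentially"
  proof (rule ZfunI, simp only: eventually_sequentially norm_sum_f)
    fix r :: real
    assume r: "0 < r"
    from CauchyD [OF Cauchy r] obtain N
      where "\<forall>m\<ge>N. \<forall>n\<ge>N. norm (sum ?f (?S1 m) - sum ?f (?S1 n)) < r" ..
    then have "\<And>m n. N \<le> n \<Longrightarrow> n \<le> m \<Longrightarrow> norm (sum ?f (?S1 m - ?S1 n)) < r"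
      by (simp only: sum_diff finite_S1 S1_mono)
    then have N: "\<And>m n. N \<le> n \<Longrightarrow> n \<le> m \<Longrightarrow> sum ?f (?S1 m - ?S1 n) < r"
      by (simp only: norm_sum_f)
    show "\<exists>N. \<forall>n\<ge>N. sum ?f (?S1 n - ?S2 n) < r"
    proof (intro exI allI impI)
      fix n
      assume "2 * N \<le> n"
      then have n: "N \<le> n div 2" by simp
      have "sum ?f (?S1 n - ?S2 n) \<le> sum ?f (?S1 n - ?S1 (n div 2))"
        by (intro sum_mono2 finite_Diff finite_S1 f_nonneg Diff_mono subset_refl S1_le_S2)
      also have "\<dots> < r"
        using n div_le_dividend by (rule N)
      finally show "sum ?f (?S1 n - ?S2 n) < r" .
    qed
  qed
  then have "Zfun (\<lambda>n. sum ?g (?S1 n - ?S2 n)) sequentially"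
    apply (rule Zfun_le [rule_format])
    apply (simp only: norm_sum_f)
    apply (rule order_trans [OF norm_sum sum_mono])
    apply (auto simp add: K(2))
    done
  then have 2: "(\<lambda>n. sum ?g (?S1 n) - sum ?g (?S2 n)) \<longlonglongrightarrow> 0"
    unfolding tendsto_Zfun_iff diff_0_right
    by (simp only: sum_diff finite_S1 S2_le_S1)
  with 1 have "(\<lambda>n. sum ?g (?S2 n)) \<longlonglongrightarrow> prod (\<Sum>k. a k) (\<Sum>k. b k)"
    by (rule Lim_transform2)
  then show ?thesis
    by (simp only: sums_def sum.triangle_reindex)
qed

section \<open>Coefficients of the square root series\<close>

definition sc :: "nat \<Rightarrow> real" where "sc n = (-1) ^ n * ((1/2::real) gchoose n)"
definition ps :: "nat \<Rightarrow> real" where "ps m = ((real m - 1/2) gchoose m)"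

lemma sc_0[simp]: "sc 0 = 1" by (simp add: sc_def)

lemma sc_conv: "(\<Sum>i\<le>k. sc i * sc (k - i)) = (if k = 0 then 1 else if k = 1 then -1 else 0)"
proof -
  have "(\<Sum>i\<le>k. sc i * sc (k - i)) = (-1) ^ k * (\<Sum>i\<in>{0..k}. ((1/2::real) gchoose i) * ((1/2) gchoose (k - i)))"
    by (auto simp: sc_def sum_distrib_left atLeast0AtMost power_add[symmetric] intro!: sum.cong)
  also have "\<dots> = (-1) ^ k * ((1::real) gchoose k)"
    using gbinomial_Vandermonde[of "1/2::real" "1/2" k] by simp
  also have "(1::real) gchoose k = of_nat (1 choose k)"
    using binomial_gbinomial[of 1 k, where 'a=real] by simp
  finally show ?thesis
    by (cases k; cases "k - 1") auto
qed

lemma ps_sum: "(\<Sum>k\<le>m. sc k) = ps m"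
proof -
  have "(\<Sum>k\<le>m. sc k) = (\<Sum>k\<le>m. ((1/2::real) gchoose k) * (- 1) ^ k)"
    by (simp add: sc_def mult.commute)
  also have "\<dots> = (- 1) ^ m * ((1/2::real) - 1 gchoose m)" by (rule gbinomial_sum_lower_neg)
  also have "((1/2::real) - 1 gchoose m) = (-1) ^ m * ((of_nat m - (1/2 - 1) - 1) gchoose m)"
    by (rule gbinomial_negated_upper)
  finally show ?thesis
    by (simp add: ps_def power_mult_distrib[symmetric] flip: power_add)
qed

lemma ps_0: "ps 0 = 1" by (simp add: ps_def)

lemma ps_Suc: "ps (Suc m) = ps m * ((real m + 1/2) / real (Suc m))"
proof -
  have "ps (Suc m) = ((real m - 1/2 + 1) gchoose Suc m)" by (simp add: ps_def algebra_simps)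
  also have "\<dots> = ((real m - 1/2) gchoose m) * ((real m - 1/2 + 1) / of_nat (Suc m))"
    by (rule gbinomial_rec)
  finally show ?thesis by (simp add: ps_def algebra_simps)
qed

lemma ps_pos: "ps m > 0"
  by (induction m) (simp_all add: ps_0 ps_Suc)

lemma sc_Suc: "sc (Suc m) = ps (Suc m) - ps m"
  using ps_sum[of "Suc m"] ps_sum[of m] by simp

lemma sc_Suc_nonpos: "sc (Suc m) \<le> 0"
proof -
  have "(real m + 1/2) / real (Suc m) \<le> 1" by simp
  then have "ps m * ((real m + 1/2) / real (Suc m)) \<le> ps m * 1"
    using ps_pos[of m] by (intro mult_left_mono) auto
  then show ?thesis by (simp add: sc_Suc ps_Suc)
qed

lemma sc_nonpos: "n \<ge> 1 \<Longrightarrow> sc n \<le> 0"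
  using sc_Suc_nonpos by (cases n) auto

lemma abs_sc_sum: "(\<Sum>k\<le>m. \<bar>sc k\<bar>) = 2 - ps m"
proof (induction m)
  case 0 then show ?case by (simp add: ps_0)
next
  case (Suc m)
  then show ?case using sc_Suc_nonpos[of m] by (simp add: sc_Suc)
qed

lemma summable_abs_sc: "summable (\<lambda>k. \<bar>sc k\<bar>)"
  by (rule bounded_imp_summable[where B=2]) (auto simp: abs_sc_sum ps_pos less_imp_le)

lemma summable_sc: "summable sc"
  using summable_abs_sc by (rule summable_rabs_cancel)

lemma suminf_sc_nonneg: "0 \<le> suminf sc"
proof (rule LIMSEQ_le_const[OF summable_LIMSEQ'[OF summable_sc]])
  show "\<exists>N. \<forall>n\<ge>N. 0 \<le> (\<Sum>i\<le>n. sc i)" by (auto simp: ps_sum ps_pos less_imp_le)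
qed


section \<open>Positive operators\<close>

lemma posop_bl: "positive_op S \<Longrightarrow> bounded_linear S"
  by (simp add: positive_op_def)

lemma posop_cscale: "positive_op S \<Longrightarrow> S (cscale a p) = cscale a (S p)"
  unfolding positive_op_def pscale_eq by blast

lemma posop_pos: "positive_op S \<Longrightarrow> Im (cinner p (S p)) = 0 \<and> 0 \<le> Re (cinner p (S p))"
  unfolding positive_op_def pinner_eq by (metis Im_complex_of_real Re_complex_of_real)

lemma posop_selfadj:
  assumes S: "positive_op S"
  shows "cinner q (S p) = cinner (S q) p"
proof -
  interpret bl: bounded_linear S using posop_bl[OF S] .
  define a where "a = cinner q (S p)"
  define b where "b = cinner p (S q)"
  have "Im (cinner (p + q) (S (p + q))) = 0" using posop_pos[OF S] by blast
  then have "Im (cinner p (S p)) + Im b + Im a + Im (cinner q (S q)) = 0"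
    by (simp add: bl.add cinner_add_left cinner_add_right a_def b_def)
  then have 1: "Im b + Im a = 0" using posop_pos[OF S, of p] posop_pos[OF S, of q] by simp
  have "Im (cinner (p + cscale \<i> q) (S (p + cscale \<i> q))) = 0" using posop_pos[OF S] by blast
  then have "Im (cinner p (S p) + \<i> * b - \<i> * a + cinner q (S q)) = 0"
    by (simp add: bl.add posop_cscale[OF S] cinner_add_left cinner_add_right cinner_cscale_left
        cinner_cscale_right a_def b_def algebra_simps)
  then have 2: "Re b - Re a = 0" using posop_pos[OF S, of p] posop_pos[OF S, of q] by simp
  have "cinner (S q) p = cnj b" by (simp add: b_def cinner_commute[of "S q"])
  then show ?thesis using 1 2 by (simp add: complex_eq_iff a_def)
qed

lemma posop_kernel:
  assumes S: "positive_op S" and y: "cinner y (S y) = 0"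
  shows "S y = 0"
proof -
  interpret bl: bounded_linear S using posop_bl[OF S] .
  have sa: "cinner y (S (S y)) = complex_of_real ((norm (S y))\<^sup>2)"
    using posop_selfadj[OF S, of y "S y"] by (simp add: cinner_norm)
  have "0 \<le> (2 * (norm (S y))\<^sup>2) * t + Re (cinner (S y) (S (S y))) * t\<^sup>2" for t :: real
  proof -
    have "0 \<le> Re (cinner (y + t *\<^sub>R S y) (S (y + t *\<^sub>R S y)))" using posop_pos[OF S] by blast
    also have "\<dots> = Re (cinner y (S y)) + t * Re (cinner y (S (S y))) + t * Re (cinner (S y) (S y))
        + t * t * Re (cinner (S y) (S (S y)))"
      by (simp add: bl.add bl.scaleR cinner_add_left cinner_add_right cinner_scaleR_left cinner_scaleR_right algebra_simps)
    also have "\<dots> = (2 * (norm (S y))\<^sup>2) * t + Re (cinner (S y) (S (S y))) * t\<^sup>2"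
      using y sa by (simp add: Re_cinner_self power2_eq_square algebra_simps)
    finally show ?thesis .
  qed
  then have "2 * (norm (S y))\<^sup>2 = 0"
    by (rule quad_nonneg_coeff) (use posop_pos[OF S] in auto)
  then show ?thesis by simp
qed

context omg
begin

definition Aop :: "'u \<Rightarrow> 'u" where "Aop u = w2 (P u)"
definition Cop :: "'u \<Rightarrow> 'y" where "Cop u = w1 (P u)"
definition Ast :: "'u \<Rightarrow> 'u" where "Ast u = Ws (0, u)"
definition Cst :: "'y \<Rightarrow> 'u" where "Cst y = Ws (y, 0)"
definition Kop :: "'y \<times> 'u \<Rightarrow> 'y \<times> 'u" where "Kop p = (w1 (Ws p), w2 (Ws p))"

lemma PF: "P x \<in> F" by (rule proj_in[OF F])

lemma w1_scaleR: "x \<in> F \<Longrightarrow> w1 (r *\<^sub>R x) = r *\<^sub>R w1 x"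
  by (simp add: scaleR_cscale w1_cscale)
lemma w2_scaleR: "x \<in> F \<Longrightarrow> w2 (r *\<^sub>R x) = r *\<^sub>R w2 x"
  by (simp add: scaleR_cscale w2_cscale)

lemma bl_Cop: "bounded_linear Cop"
  unfolding Cop_def
  by (rule bounded_linear_intro[where K=1])
    (auto simp: proj_add[OF F] proj_scaleR[OF F] w1_add PF w1_scaleR
      intro: order_trans[OF w1_norm[OF PF] proj_norm[OF F]])

lemma bl_Aop: "bounded_linear Aop"
  unfolding Aop_def
  by (rule bounded_linear_intro[where K=1])
    (auto simp: proj_add[OF F] proj_scaleR[OF F] w2_add PF w2_scaleR
      intro: order_trans[OF w2_norm[OF PF] proj_norm[OF F]])

lemma Cop_cscale: "Cop (cscale a x) = cscale a (Cop x)"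
  by (simp add: Cop_def proj_cscale[OF F] w1_cscale PF)
lemma Aop_cscale: "Aop (cscale a x) = cscale a (Aop x)"
  by (simp add: Aop_def proj_cscale[OF F] w2_cscale PF)

lemma CA_norm: "(norm (Cop x))\<^sup>2 + (norm (Aop x))\<^sup>2 \<le> (norm x)\<^sup>2"
  unfolding Cop_def Aop_def
  using w_norm[OF PF, of x] proj_norm[OF F, of x]
  by (meson norm_ge_zero order_trans power_mono)

lemma Aop_norm: "norm (Aop x) \<le> norm x"
  unfolding Aop_def using w2_norm[OF PF] proj_norm[OF F] order_trans by blast

lemma proj_inner_left: "v \<in> F \<Longrightarrow> cinner (P x) v = cinner x v"
  using proj_orth'[OF F, of v x] by (simp add: cinner_diff_left)

lemma Cop_adj: "cinner (Cop x) y = cinner x (Cst y)"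
proof -
  have "cinner x (Cst y) = cinner (P x) (Ws (y, 0))"
    unfolding Cst_def by (rule proj_inner_left[OF Ws_in, symmetric])
  also have "\<dots> = cinner (Cop x) y" by (simp add: Ws_char[OF PF] Cop_def)
  finally show ?thesis by simp
qed

lemma Aop_adj: "cinner (Aop x) u = cinner x (Ast u)"
proof -
  have "cinner x (Ast u) = cinner (P x) (Ws (0, u))"
    unfolding Ast_def by (rule proj_inner_left[OF Ws_in, symmetric])
  also have "\<dots> = cinner (Aop x) u" by (simp add: Ws_char[OF PF] Aop_def)
  finally show ?thesis by simp
qed

lemma Ws_split: "Ws (y, u) = Cst y + Ast u"
  using Ws_add[of "(y, 0)" "(0, u)"] by (simp add: Cst_def Ast_def)

lemma bl_Ast: "bounded_linear Ast"
  unfolding Ast_def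
  by (rule bounded_linear_intro[where K=1])
    (auto simp: Ws_add[symmetric] Ws_scaleR[symmetric] intro: order_trans[OF Ws_norm])

lemma bl_Cst: "bounded_linear Cst"
  unfolding Cst_def
  by (rule bounded_linear_intro[where K=1])
    (auto simp: Ws_add[symmetric] Ws_scaleR[symmetric] intro: order_trans[OF Ws_norm])

lemma Ast_norm: "norm (Ast u) \<le> norm u"
  unfolding Ast_def using Ws_norm[of "(0, u)"] by simp
lemma Cst_norm: "norm (Cst y) \<le> norm y"
  unfolding Cst_def using Ws_norm[of "(y, 0)"] by simp
lemma Ast_cscale: "Ast (cscale a u) = cscale a (Ast u)"
  unfolding Ast_def using Ws_cscale[of a "(0, u)"] by (simp add: cscale_Pair)
lemma Ast_in: "Ast u \<in> F" unfolding Ast_def by (rule Ws_in)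
lemma Cst_in: "Cst u \<in> F" unfolding Cst_def by (rule Ws_in)

lemma bl_Kop: "bounded_linear Kop"
  unfolding Kop_def
  by (rule bounded_linear_intro[where K=1])
    (auto simp: Ws_add Ws_scaleR w1_add w2_add w1_scaleR w2_scaleR Ws_in
      intro: order_trans[OF w_pair_norm[OF Ws_in] Ws_norm])

lemma Kop_cscale: "Kop (cscale a p) = cscale a (Kop p)"
  by (simp add: Kop_def Ws_cscale w1_cscale w2_cscale Ws_in cscale_Pair)

lemma Kop_norm: "norm (Kop p) \<le> norm p"
  unfolding Kop_def by (rule order_trans[OF w_pair_norm[OF Ws_in] Ws_norm])

lemma Kop_inner_left: "cinner (Kop q) p = cinner (Ws q) (Ws p)"
  unfolding Kop_def by (rule Ws_char'[OF Ws_in, symmetric])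

lemma Kop_inner: "cinner q (Kop p) = cinner (Ws q) (Ws p)"
proof -
  have "cinner q (Kop p) = cnj (cinner (Kop p) q)" by (rule cinner_commute)
  also have "\<dots> = cnj (cinner (Ws p) (Ws q))" by (simp add: Kop_inner_left)
  also have "\<dots> = cinner (Ws q) (Ws p)" by (simp add: cinner_commute[of "Ws q"])
  finally show ?thesis .
qed

lemma Kop_sym: "cinner (Kop q) p = cinner q (Kop p)"
  by (simp add: Kop_inner Kop_inner_left)

abbreviation "Kn n \<equiv> Kop ^^ n"

lemma bl_Kn: "bounded_linear (Kn n)"
  by (induction n) (auto simp: bounded_linear_ident[unfolded id_def] intro: bounded_linear_compose[OF bl_Kop])

lemma Kn_norm: "norm (Kn n p) \<le> norm p"
  by (induction n) (auto intro: order_trans[OF Kop_norm])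

lemma Kn_cscale: "Kn n (cscale a p) = cscale a (Kn n p)"
  by (induction n) (auto simp: Kop_cscale)

lemma Kn_sym: "cinner (Kn n q) p = cinner q (Kn n p)"
proof (induction n arbitrary: p)
  case 0 then show ?case by simp
next
  case (Suc n)
  have "cinner (Kn (Suc n) q) p = cinner (Kop (Kn n q)) p" by simp
  also have "\<dots> = cinner (Kn n q) (Kop p)" by (rule Kop_sym)
  also have "\<dots> = cinner q (Kn n (Kop p))" by (rule Suc)
  also have "Kn n (Kop p) = Kn (Suc n) p" by (simp add: funpow_Suc_right del: funpow.simps)
  finally show ?case .
qed

lemma Kn_real: "Im (cinner p (Kn n p)) = 0"
proof -
  have "cinner p (Kn n p) = cnj (cinner (Kn n p) p)" by (rule cinner_commute)
  also have "\<dots> = cnj (cinner p (Kn n p))" by (simp add: Kn_sym)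
  finally have "Im (cinner p (Kn n p)) = Im (cnj (cinner p (Kn n p)))" by (rule arg_cong)
  then show ?thesis by simp
qed

lemma Kn_add_exp: "Kn i (Kn j p) = Kn (i + j) p"
  by (simp add: funpow_add)

lemma Kn_scaleR: "Kn n (r *\<^sub>R p) = r *\<^sub>R Kn n p"
  by (rule linear.scaleR[OF bounded_linear.linear[OF bl_Kn]])

end


context omg
begin

definition D0 :: "'y \<times> 'u \<Rightarrow> 'y \<times> 'u" where "D0 p = (\<Sum>n. sc n *\<^sub>R Kn n p)"

lemma norm_D0_term: "norm (sc n *\<^sub>R Kn n p) \<le> \<bar>sc n\<bar> * norm p"
  by (simp add: mult_left_mono Kn_norm)

lemma summable_norm_D0: "summable (\<lambda>n. norm (sc n *\<^sub>R Kn n p))"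
  by (rule summable_comparison_test'[where g="\<lambda>n. \<bar>sc n\<bar> * norm p" and N=0])
    (auto intro: summable_mult2 summable_abs_sc order_trans[OF _ norm_D0_term])

lemma summable_D0: "summable (\<lambda>n. sc n *\<^sub>R Kn n p)"
  by (rule summable_norm_cancel[OF summable_norm_D0])

definition KB :: "nat \<Rightarrow> ('y \<times> 'u) \<Rightarrow>\<^sub>L ('y \<times> 'u)" where "KB n = Blinfun (Kn n)"

lemma KB_apply: "blinfun_apply (KB n) = Kn n"
  unfolding KB_def by (rule bounded_linear_Blinfun_apply[OF bl_Kn])

lemma norm_KB: "norm (KB n) \<le> 1"
  by (rule norm_blinfun_bound) (auto simp: KB_apply Kn_norm)

lemma summable_KB: "summable (\<lambda>n. norm (sc n *\<^sub>R KB n))"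
proof (rule summable_comparison_test'[where g="\<lambda>n. \<bar>sc n\<bar>" and N=0])
  show "summable (\<lambda>n. \<bar>sc n\<bar>)" by (rule summable_abs_sc)
  show "norm (norm (sc n *\<^sub>R KB n)) \<le> \<bar>sc n\<bar>" for n
    using norm_KB[of n] by (simp add: mult_left_le)
qed

definition DB :: "('y \<times> 'u) \<Rightarrow>\<^sub>L ('y \<times> 'u)" where "DB = (\<Sum>n. sc n *\<^sub>R KB n)"

lemma DB_apply: "blinfun_apply DB p = D0 p"
proof -
  have "blinfun_apply DB p = (\<Sum>n. blinfun_apply (sc n *\<^sub>R KB n) p)"
    unfolding DB_def
    by (rule bounded_linear.suminf[OF blinfun.bounded_linear_left summable_norm_cancel[OF summable_KB]])
  also have "\<dots> = D0 p" by (simp add: D0_def KB_apply blinfun.scaleR_left)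
  finally show ?thesis .
qed

lemma D0_blinfun: "D0 = blinfun_apply DB"
  by (simp add: fun_eq_iff DB_apply)

lemma bl_D0: "bounded_linear D0"
  unfolding D0_blinfun by (rule blinfun.bounded_linear_right)

lemma D0_sq: "D0 (D0 p) = p - Kop p"
proof -
  have "(\<lambda>k. \<Sum>i\<le>k. blinfun_apply (sc i *\<^sub>R KB i) (sc (k - i) *\<^sub>R Kn (k - i) p))
      sums blinfun_apply (\<Sum>k. sc k *\<^sub>R KB k) (\<Sum>k. sc k *\<^sub>R Kn k p)"
    by (rule bilinear_Cauchy_product_sums[OF bounded_bilinear_blinfun_apply summable_KB summable_norm_D0])
  also have "blinfun_apply (\<Sum>k. sc k *\<^sub>R KB k) (\<Sum>k. sc k *\<^sub>R Kn k p) = D0 (D0 p)"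
    by (simp add: DB_def[symmetric] DB_apply D0_def[symmetric])
  also have "(\<lambda>k. \<Sum>i\<le>k. blinfun_apply (sc i *\<^sub>R KB i) (sc (k - i) *\<^sub>R Kn (k - i) p))
      = (\<lambda>k. (if k = 0 then 1 else if k = 1 then -1 else 0) *\<^sub>R Kn k p)"
  proof
    fix k
    have "(\<Sum>i\<le>k. blinfun_apply (sc i *\<^sub>R KB i) (sc (k - i) *\<^sub>R Kn (k - i) p))
        = (\<Sum>i\<le>k. (sc i * sc (k - i)) *\<^sub>R Kn k p)"
    proof (rule sum.cong[OF refl])
      fix i assume "i \<in> {..k}"
      then have ik: "i + (k - i) = k" by simp
      show "blinfun_apply (sc i *\<^sub>R KB i) (sc (k - i) *\<^sub>R Kn (k - i) p) = (sc i * sc (k - i)) *\<^sub>R Kn k p"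
        by (simp add: blinfun.scaleR_left KB_apply Kn_scaleR Kn_add_exp ik)
    qed
    also have "\<dots> = (\<Sum>i\<le>k. sc i * sc (k - i)) *\<^sub>R Kn k p"
      by (simp add: scaleR_sum_left)
    finally show "(\<Sum>i\<le>k. blinfun_apply (sc i *\<^sub>R KB i) (sc (k - i) *\<^sub>R Kn (k - i) p))
        = (if k = 0 then 1 else if k = 1 then -1 else 0) *\<^sub>R Kn k p"
      by (simp only: sc_conv)
  qed
  finally have s: "(\<lambda>k. (if k = 0 then 1 else if k = 1 then -1 else 0) *\<^sub>R Kn k p) sums D0 (D0 p)" .
  have "(\<lambda>k. (if k = 0 then 1 else if k = 1 then -1 else 0) *\<^sub>R Kn k p) sums
      (\<Sum>k\<in>{0,1}. (if k = 0 then 1 else if k = 1 then -1 else 0) *\<^sub>R Kn k p)"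
    by (rule sums_finite) auto
  also have "(\<Sum>k\<in>{0,1::nat}. (if k = 0 then 1 else if k = 1 then -1 else 0) *\<^sub>R Kn k p) = p - Kop p"
    by simp
  finally show ?thesis using s sums_unique2 by blast
qed

lemma D0_cscale: "D0 (cscale a p) = cscale a (D0 p)"
proof -
  have "D0 (cscale a p) = (\<Sum>n. cscale a (sc n *\<^sub>R Kn n p))"
    by (simp add: D0_def Kn_cscale cscale_scaleR)
  also have "\<dots> = cscale a (D0 p)"
    unfolding D0_def by (rule bounded_linear.suminf[OF bounded_linear_cscale summable_D0, symmetric])
  finally show ?thesis .
qed

lemma D0_pos: "\<exists>r\<ge>0. cinner p (D0 p) = complex_of_real r"
proof -
  define t where "t n = Re (cinner p (Kn n p))" for n
  have ct: "cinner p (Kn n p) = complex_of_real (t n)" for n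
    by (simp add: t_def complex_eq_iff Kn_real)
  have tb: "\<bar>t n\<bar> \<le> (norm p)\<^sup>2" for n
  proof -
    have "\<bar>t n\<bar> \<le> cmod (cinner p (Kn n p))" by (simp add: t_def abs_Re_le_cmod)
    also have "\<dots> \<le> norm p * norm (Kn n p)" by (rule cauchy_schwarz)
    also have "\<dots> \<le> norm p * norm p" by (intro mult_left_mono Kn_norm) simp
    finally show ?thesis by (simp add: power2_eq_square)
  qed
  have summ: "summable (\<lambda>n. sc n * t n)"
  proof (rule summable_comparison_test'[where g="\<lambda>n. \<bar>sc n\<bar> * (norm p)\<^sup>2" and N=0])
    show "summable (\<lambda>n. \<bar>sc n\<bar> * (norm p)\<^sup>2)" by (intro summable_mult2 summable_abs_sc)
    show "norm (sc n * t n) \<le> \<bar>sc n\<bar> * (norm p)\<^sup>2" for n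
      using tb[of n] by (simp add: abs_mult mult_left_mono)
  qed
  have "cinner p (D0 p) = (\<Sum>n. cinner p (sc n *\<^sub>R Kn n p))"
    unfolding D0_def by (rule bounded_linear.suminf[OF bounded_linear_cinner_right summable_D0])
  also have "\<dots> = (\<Sum>n. complex_of_real (sc n * t n))"
    by (simp add: cinner_scaleR_right ct)
  also have "\<dots> = complex_of_real (\<Sum>n. sc n * t n)"
    by (rule suminf_of_real[OF summ, symmetric])
  finally have eq: "cinner p (D0 p) = complex_of_real (\<Sum>n. sc n * t n)" .
  have "suminf sc * (norm p)\<^sup>2 = (\<Sum>n. sc n * (norm p)\<^sup>2)"
    by (rule suminf_mult2[OF summable_sc])
  also have "\<dots> \<le> (\<Sum>n. sc n * t n)"
  proof (rule suminf_le)
    fix n show "sc n * (norm p)\<^sup>2 \<le> sc n * t n"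
    proof (cases n)
      case 0 then show ?thesis by (simp add: t_def Re_cinner_self)
    next
      case (Suc m)
      have "t n \<le> (norm p)\<^sup>2" using tb[of n] by simp
      then show ?thesis using sc_Suc_nonpos[of m] Suc by (intro mult_left_mono_neg) auto
    qed
  qed (auto intro: summable_mult2 summable_sc summ)
  finally have "0 \<le> (\<Sum>n. sc n * t n)"
    using suminf_sc_nonneg by (meson order_trans zero_le_mult_iff zero_le_power2)
  then show ?thesis using eq by blast
qed

lemma D0_posop: "positive_op D0"
  unfolding positive_op_def pscale_eq pinner_eq using bl_D0 D0_cscale D0_pos by blast

lemma D0_unique:
  assumes S: "positive_op S" and SS: "\<And>p. S (S p) = p - Kop p"
  shows "S = D0"
proof
  fix x
  interpret bS: bounded_linear S by (rule posop_bl[OF S])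
  interpret bD: bounded_linear D0 by (rule bl_D0)
  have SK: "S (Kop p) = Kop (S p)" for p
  proof -
    have "Kop p = p - S (S p)" using SS[of p] by simp
    then have "S (Kop p) = S p - S (S (S p))" by (simp add: bS.diff)
    moreover have "Kop (S p) = S p - S (S (S p))" using SS[of "S p"] by simp
    ultimately show ?thesis by simp
  qed
  have SKn: "S (Kn n p) = Kn n (S p)" for n p
    by (induction n arbitrary: p) (simp_all add: SK)
  have SD: "S (D0 p) = D0 (S p)" for p
  proof -
    have "S (D0 p) = (\<Sum>n. S (sc n *\<^sub>R Kn n p))"
      unfolding D0_def by (rule bS.suminf[OF summable_D0])
    also have "\<dots> = D0 (S p)" by (simp add: D0_def bS.scaleR SKn)
    finally show ?thesis .
  qed
  define y where "y = D0 x - S x"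
  have "D0 y + S y = D0 (D0 x) - D0 (S x) + (S (D0 x) - S (S x))"
    by (simp add: y_def bD.diff bS.diff)
  also have "\<dots> = 0" by (simp add: D0_sq SS SD)
  finally have "cinner y (D0 y) + cinner y (S y) = 0"
    by (metis cinner_add_right cinner_zero_right)
  moreover have "Im (cinner y (D0 y)) = 0 \<and> 0 \<le> Re (cinner y (D0 y))" by (rule posop_pos[OF D0_posop])
  moreover have "Im (cinner y (S y)) = 0 \<and> 0 \<le> Re (cinner y (S y))" by (rule posop_pos[OF S])
  ultimately have "cinner y (D0 y) = 0" "cinner y (S y) = 0"
    by (auto simp: complex_eq_iff)
  then have Dy: "D0 y = 0" and Sy: "S y = 0"
    by (auto intro: posop_kernel[OF D0_posop] posop_kernel[OF S])
  have "cinner y y = cinner y (D0 x) - cinner y (S x)"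
    by (simp add: y_def cinner_diff_right)
  also have "\<dots> = cinner (D0 y) x - cinner (S y) x"
    by (simp add: posop_selfadj[OF D0_posop] posop_selfadj[OF S])
  also have "\<dots> = 0" by (simp add: Dy Sy)
  finally have "y = 0" by (simp add: cinner_self_eq_0)
  then show "S x = D0 x" by (simp add: y_def)
qed

abbreviation "D \<equiv> Dstar F w1 w2"

lemma Dstar_eq: "D = D0"
  unfolding Dstar_def
proof (rule the_equality)
  have "p - (w1 (Ws p), w2 (Ws p)) = p - Kop p" for p by (simp add: Kop_def)
  then show "positive_op D0 \<and> (\<forall>p. D0 (D0 p) = p - (w1 (Ws p), w2 (Ws p)))"
    using D0_posop D0_sq by simp
next
  fix S assume "positive_op S \<and> (\<forall>p. S (S p) = p - (w1 (Ws p), w2 (Ws p)))"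
  then show "S = D0" by (intro D0_unique) (auto simp: Kop_def)
qed

lemma D_posop: "positive_op D" by (simp add: Dstar_eq D0_posop)
lemma bl_D: "bounded_linear D" by (simp add: Dstar_eq bl_D0)
lemma D_sq: "D (D p) = p - Kop p" by (simp add: Dstar_eq D0_sq)
lemma D_selfadj: "cinner q (D p) = cinner (D q) p" by (rule posop_selfadj[OF D_posop])
lemma D_cscale: "D (cscale a p) = cscale a (D p)" by (rule posop_cscale[OF D_posop])

lemma D_norm_id: "(norm (Ws p))\<^sup>2 + (norm (D p))\<^sup>2 = (norm p)\<^sup>2"
proof -
  have "complex_of_real ((norm (D p))\<^sup>2) = cinner (D p) (D p)" by (simp add: cinner_norm)
  also have "\<dots> = cinner p (D (D p))" by (simp add: D_selfadj)
  also have "\<dots> = cinner p p - cinner (Ws p) (Ws p)" by (simp add: D_sq cinner_diff_right Kop_inner)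
  also have "\<dots> = complex_of_real ((norm p)\<^sup>2 - (norm (Ws p))\<^sup>2)" by (simp add: cinner_norm)
  finally show ?thesis by (metis add.commute diff_add_cancel of_real_eq_iff)
qed

end


section \<open>Uniqueness of power series coefficients\<close>

lemma scalar_powser_zero:
  fixes c :: "nat \<Rightarrow> complex"
  assumes s: "\<And>x. norm x < 1 \<Longrightarrow> (\<lambda>n. c n * x ^ n) sums 0"
  shows "c k = 0"
proof -
  have "c k = 0 \<and> (\<forall>x. x \<noteq> 0 \<longrightarrow> norm x < 1 \<longrightarrow> (\<lambda>n. c (n + k) * x ^ n) sums 0)"
  proof (induction k)
    case 0
    have "c 0 = 0" using s[of 0] by simp
    then show ?case using s by simp
  next
    case (Suc k)
    have IH: "\<And>x. x \<noteq> 0 \<Longrightarrow> norm x < 1 \<Longrightarrow> (\<lambda>n. c (n + k) * x ^ n) sums 0" and ck: "c k = 0"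
      using Suc by auto
    have sk: "(\<lambda>n. c (n + Suc k) * x ^ n) sums 0" if x: "x \<noteq> 0" "norm x < 1" for x
    proof -
      have "(\<lambda>n. c (Suc n + k) * x ^ Suc n) sums 0"
        using IH[OF x] ck by (subst sums_Suc_iff) simp
      then have "(\<lambda>n. c (n + Suc k) * x ^ n * x) sums 0"
        using ck by (simp add: mult.assoc mult.commute[of x])
      then have "(\<lambda>n. c (n + Suc k) * x ^ n * x * inverse x) sums (0 * inverse x)"
        by (rule sums_mult2)
      moreover have "(\<lambda>n. c (n + Suc k) * x ^ n * x * inverse x) = (\<lambda>n. c (n + Suc k) * x ^ n)"
        by (simp only: mult.assoc right_inverse[OF x(1)] mult_1_right)
      ultimately show ?thesis by (simp only: mult_zero_left)
    qed
    have "((\<lambda>x::complex. 0) \<longlongrightarrow> c (0 + Suc k)) (at 0)"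
      by (rule powser_limit_0_strong[where a="\<lambda>n. c (n + Suc k)" and s=1 and f="\<lambda>x. 0"]) (use sk in auto)
    then have "0 = c (Suc k)" by (intro LIM_const_eq) simp
    then have "c (Suc k) = 0" by simp
    then show ?case using sk by auto
  qed
  then show ?thesis by blast
qed

lemma vec_powser_zero:
  fixes d :: "nat \<Rightarrow> 'a::chilbert_space"
  assumes s: "\<And>z. cmod z < 1 \<Longrightarrow> (\<lambda>n. cscale (z ^ n) (d n)) sums 0"
  shows "d = (\<lambda>_. 0)"
proof
  fix k
  have "(\<lambda>n. cinner (d k) (d n) * z ^ n) sums 0" if "norm z < 1" for z
  proof -
    have "(\<lambda>n. cinner (d k) (cscale (z ^ n) (d n))) sums cinner (d k) 0"
      by (rule bounded_linear.sums[OF bounded_linear_cinner_right s]) (use that in simp)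
    then show ?thesis by (simp add: cinner_cscale_right mult.commute)
  qed
  then have "cinner (d k) (d k) = 0" by (rule scalar_powser_zero)
  then show "d k = 0" by (simp add: cinner_self_eq_0)
qed

lemma powser_unique:
  fixes a b :: "nat \<Rightarrow> 'a::chilbert_space"
  assumes a: "\<And>z. cmod z < 1 \<Longrightarrow> (\<lambda>n. cscale (z ^ n) (a n)) sums f z"
    and b: "\<And>z. cmod z < 1 \<Longrightarrow> (\<lambda>n. cscale (z ^ n) (b n)) sums f z"
  shows "a = b"
proof -
  have "(\<lambda>n. a n - b n) = (\<lambda>_. 0)"
  proof (rule vec_powser_zero)
    fix z :: complex assume z: "cmod z < 1"
    have "(\<lambda>n. cscale (z ^ n) (a n) - cscale (z ^ n) (b n)) sums (f z - f z)"
      by (rule sums_diff[OF a[OF z] b[OF z]])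
    then show "(\<lambda>n. cscale (z ^ n) (a n - b n)) sums 0" by (simp add: cscale_diff_right)
  qed
  then show ?thesis by (simp add: fun_eq_iff)
qed

lemma h2_coeffs_eq:
  assumes "\<And>z. cmod z < 1 \<Longrightarrow> (\<lambda>n. cscale (z ^ n) (a n)) sums f z"
  shows "h2_coeffs f = a"
proof -
  have ex: "\<forall>z\<in>ball 0 1. (\<lambda>n. cscale (z ^ n) (a n)) sums f z" using assms by simp
  show ?thesis unfolding h2_coeffs_def
  proof (rule someI2[where a=a])
    show "\<forall>z\<in>ball 0 1. (\<lambda>n. cscale (z ^ n) (a n)) sums f z" by (rule ex)
  next
    fix b assume "\<forall>z\<in>ball 0 1. (\<lambda>n. cscale (z ^ n) (b n)) sums f z"
    then show "b = a" by (intro powser_unique[where f=f]) (use assms in auto)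
  qed
qed

lemma H2_elim:
  assumes "f \<in> H2"
  obtains a where "summable (\<lambda>n. (norm (a n))\<^sup>2)" "\<And>z. cmod z < 1 \<Longrightarrow> (\<lambda>n. cscale (z ^ n) (a n)) sums f z"
    "h2_coeffs f = a"
proof -
  from assms obtain a where a: "summable (\<lambda>n. (norm (a n))\<^sup>2)" "\<forall>z\<in>ball 0 1. (\<lambda>n. cscale (z ^ n) (a n)) sums f z"
    unfolding H2_def by auto
  then have "\<And>z. cmod z < 1 \<Longrightarrow> (\<lambda>n. cscale (z ^ n) (a n)) sums f z" by simp
  then show thesis using that[OF a(1)] h2_coeffs_eq by blast
qed

lemma H2_intro:
  assumes "summable (\<lambda>n. (norm (a n))\<^sup>2)" "\<And>z. cmod z < 1 \<Longrightarrow> (\<lambda>n. cscale (z ^ n) (a n)) sums f z"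
  shows "f \<in> H2"
  using assms unfolding H2_def by auto


context omg
begin

abbreviation "An n \<equiv> Aop ^^ n"
abbreviation "Bn n \<equiv> Ast ^^ n"

lemma bl_An: "bounded_linear (An n)"
  by (induction n) (auto simp: bounded_linear_ident[unfolded id_def] intro: bounded_linear_compose[OF bl_Aop])
lemma bl_Bn: "bounded_linear (Bn n)"
  by (induction n) (auto simp: bounded_linear_ident[unfolded id_def] intro: bounded_linear_compose[OF bl_Ast])
lemma An_norm: "norm (An n p) \<le> norm p"
  by (induction n) (auto intro: order_trans[OF Aop_norm])
lemma Bn_norm: "norm (Bn n p) \<le> norm p"
  by (induction n) (auto intro: order_trans[OF Ast_norm])
lemma An_cscale: "An n (cscale a p) = cscale a (An n p)"
  by (induction n) (auto simp: Aop_cscale)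
lemma Bn_cscale: "Bn n (cscale a p) = cscale a (Bn n p)"
  by (induction n) (auto simp: Ast_cscale)

lemma An_adj: "cinner (An n x) u = cinner x (Bn n u)"
proof (induction n arbitrary: u)
  case 0 then show ?case by simp
next
  case (Suc n)
  have "cinner (An (Suc n) x) u = cinner (An n x) (Ast u)" by (simp add: Aop_adj)
  also have "\<dots> = cinner x (Bn n (Ast u))" by (rule Suc)
  also have "Bn n (Ast u) = Bn (Suc n) u" by (simp add: funpow_Suc_right del: funpow.simps)
  finally show ?case .
qed

lemma CAn_adj: "cinner (Cop (An n x)) y = cinner x (Bn n (Cst y))"
  by (simp add: Cop_adj An_adj)

definition Nz :: "complex \<Rightarrow> 'u \<Rightarrow> 'u" where "Nz z u = (\<Sum>n. cscale (z ^ n) (An n u))"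

lemma summable_Nz: "cmod z < 1 \<Longrightarrow> summable (\<lambda>n. cscale (z ^ n) (An n u))"
proof (rule summable_comparison_test'[where g="\<lambda>n. cmod z ^ n * norm u" and N=0])
  assume "cmod z < 1"
  then show "summable (\<lambda>n. cmod z ^ n * norm u)" by (intro summable_mult2 summable_geometric) simp
  show "norm (cscale (z ^ n) (An n u)) \<le> cmod z ^ n * norm u" for n
    by (simp add: norm_cscale norm_power mult_left_mono An_norm)
qed

lemma T_Nz:
  assumes z: "cmod z < 1"
  shows "Nz z u - cscale z (w2 (P (Nz z u))) = u"
proof -
  let ?X = "\<lambda>n. cscale (z ^ n) (An n u)"
  have bl: "bounded_linear (\<lambda>x. cscale z (Aop x))"
    by (rule bounded_linear_compose[OF bounded_linear_cscale bl_Aop])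
  have "cscale z (Aop (Nz z u)) = (\<Sum>n. cscale z (Aop (?X n)))"
    unfolding Nz_def by (rule bounded_linear.suminf[OF bl summable_Nz[OF z]])
  also have "\<dots> = (\<Sum>n. ?X (Suc n))"
    by (simp add: Aop_cscale cscale_cscale mult.commute)
  also have "\<dots> = Nz z u - u"
    unfolding Nz_def by (subst suminf_split_head[OF summable_Nz[OF z]]) (simp add: cscale_one)
  finally show ?thesis by (simp add: Aop_def)
qed

lemma inj_T:
  assumes z: "cmod z < 1"
  shows "inj (\<lambda>x. x - cscale z (w2 (P x)))"
proof (rule injI)
  fix x y assume "x - cscale z (w2 (P x)) = y - cscale z (w2 (P y))"
  then have "x - y = cscale z (Aop x) - cscale z (Aop y)" by (simp add: Aop_def algebra_simps)
  also have "\<dots> = cscale z (Aop (x - y))"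
    using bounded_linear.linear[OF bl_Aop] by (simp add: cscale_diff_right linear_diff)
  finally have "norm (x - y) = norm (cscale z (Aop (x - y)))" by (rule arg_cong)
  also have "\<dots> = cmod z * norm (Aop (x - y))" by (rule norm_cscale)
  also have "\<dots> \<le> cmod z * norm (x - y)" by (intro mult_left_mono Aop_norm) simp
  finally have "(1 - cmod z) * norm (x - y) \<le> 0" by (simp add: algebra_simps)
  then have "norm (x - y) \<le> 0" using z by (simp add: mult_le_0_iff)
  then show "x = y" by simp
qed

lemma resolv_eq:
  assumes z: "cmod z < 1"
  shows "resolv F w2 z u = Nz z u"
proof -
  have "resolv F w2 z u = inv (\<lambda>x. x - cscale z (w2 (P x))) ((\<lambda>x. x - cscale z (w2 (P x))) (Nz z u))"
    unfolding resolv_def using T_Nz[OF z, of u] by simp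
  also have "\<dots> = Nz z u" by (rule inv_f_f[OF inj_T[OF z]])
  finally show ?thesis .
qed

lemma Nz_sums: "cmod z < 1 \<Longrightarrow> (\<lambda>n. cscale (z ^ n) (An n u)) sums Nz z u"
  unfolding Nz_def by (rule summable_sums[OF summable_Nz])

lemma Phi22_eq: "cmod z < 1 \<Longrightarrow> Phi22 F w1 w2 z u = Cop (Nz z u)"
  by (simp add: Phi22_def resolv_eq Cop_def)

lemma Phi22_sums:
  assumes z: "cmod z < 1"
  shows "(\<lambda>n. cscale (z ^ n) (Cop (An n u))) sums Phi22 F w1 w2 z u"
  using bounded_linear.sums[OF bl_Cop Nz_sums[OF z, of u]] by (simp add: Phi22_eq[OF z] Cop_cscale)

lemma coeff_partial: "(\<Sum>n<N. (norm (Cop (An n u)))\<^sup>2) \<le> (norm u)\<^sup>2 - (norm (An N u))\<^sup>2"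
proof (induction N)
  case 0 then show ?case by simp
next
  case (Suc N)
  have "(norm (Cop (An N u)))\<^sup>2 + (norm (Aop (An N u)))\<^sup>2 \<le> (norm (An N u))\<^sup>2" by (rule CA_norm)
  then show ?case using Suc by simp
qed

lemma coeff_summable: "summable (\<lambda>n. (norm (Cop (An n u)))\<^sup>2)"
proof (rule summableI_nonneg_bounded[where x="(norm u)\<^sup>2"])
  show "(\<Sum>i<n. (norm (Cop (An i u)))\<^sup>2) \<le> (norm u)\<^sup>2" for n
    using coeff_partial[where N=n and u=u] by (smt (verit) zero_le_power2)
qed simp

lemma G_H2: "(\<lambda>z. Phi22 F w1 w2 z u) \<in> H2"
  by (rule H2_intro[OF coeff_summable]) (rule Phi22_sums)

lemma h2c_G: "h2_coeffs (\<lambda>z. Phi22 F w1 w2 z u) = (\<lambda>n. Cop (An n u))"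
  by (rule h2_coeffs_eq) (rule Phi22_sums)

end


context omg
begin

lemma lin_Ast: "linear Ast" by (rule bounded_linear.linear[OF bl_Ast])
lemma lin_Bn: "linear (Bn n)" by (rule bounded_linear.linear[OF bl_Bn])
lemma lin_D: "linear D" by (rule bounded_linear.linear[OF bl_D])

lemma fin_bound: "(norm (\<Sum>n<N. Bn n (Cst (v n))))\<^sup>2 \<le> (\<Sum>n<N. (norm (v n))\<^sup>2)"
proof (induction N arbitrary: v)
  case 0 then show ?case by simp
next
  case (Suc N)
  define R where "R = (\<Sum>n<N. Bn n (Cst (v (Suc n))))"
  have "(\<Sum>n<Suc N. Bn n (Cst (v n))) = Cst (v 0) + (\<Sum>n<N. Ast (Bn n (Cst (v (Suc n)))))"
    by (simp add: sum.lessThan_Suc_shift del: sum.lessThan_Suc)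
  also have "\<dots> = Cst (v 0) + Ast R"
    by (simp add: R_def linear_sum[OF lin_Ast] o_def)
  also have "\<dots> = Ws (v 0, R)" by (simp add: Ws_split)
  finally have eq: "(\<Sum>n<Suc N. Bn n (Cst (v n))) = Ws (v 0, R)" .
  have "(norm (Ws (v 0, R)))\<^sup>2 \<le> (norm (v 0, R))\<^sup>2"
    by (intro power_mono Ws_norm) simp
  also have "\<dots> = (norm (v 0))\<^sup>2 + (norm R)\<^sup>2" by (simp add: norm_Pair)
  also have "\<dots> \<le> (norm (v 0))\<^sup>2 + (\<Sum>n<N. (norm (v (Suc n)))\<^sup>2)"
    using Suc[of "\<lambda>n. v (Suc n)"] by (simp add: R_def)
  also have "\<dots> = (\<Sum>n<Suc N. (norm (v n))\<^sup>2)"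
    by (simp add: sum.lessThan_Suc_shift del: sum.lessThan_Suc)
  finally show ?case by (simp only: eq)
qed

lemma summable_Gs:
  assumes v: "summable (\<lambda>n. (norm (v n))\<^sup>2)"
  shows "summable (\<lambda>n. Bn n (Cst (v n)))"
  unfolding summable_Cauchy
proof (intro allI impI)
  fix e :: real assume e: "0 < e"
  then have e2: "0 < e\<^sup>2" by simp
  from v[unfolded summable_Cauchy, rule_format, OF e2] obtain N where
    N: "\<And>m n. m \<ge> N \<Longrightarrow> norm (\<Sum>k\<in>{m..<n}. (norm (v k))\<^sup>2) < e\<^sup>2" by blast
  have "norm (\<Sum>k\<in>{m..<n}. Bn k (Cst (v k))) < e" if m: "m \<ge> N" for m n
  proof -
    have "(\<Sum>k\<in>{m..<n}. Bn k (Cst (v k))) = (\<Sum>j<n - m. Bn m (Bn j (Cst (v (m + j)))))"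
      by (subst sum.atLeastLessThan_shift_0) (simp add: lessThan_atLeast0 funpow_add)
    also have "\<dots> = Bn m (\<Sum>j<n - m. Bn j (Cst (v (m + j))))"
      by (simp add: linear_sum[OF lin_Bn] o_def)
    finally have "norm (\<Sum>k\<in>{m..<n}. Bn k (Cst (v k))) \<le> norm (\<Sum>j<n - m. Bn j (Cst (v (m + j))))"
      using Bn_norm by simp
    then have "(norm (\<Sum>k\<in>{m..<n}. Bn k (Cst (v k))))\<^sup>2 \<le> (norm (\<Sum>j<n - m. Bn j (Cst (v (m + j)))))\<^sup>2"
      by (rule power_mono) simp
    also have "\<dots> \<le> (\<Sum>j<n - m. (norm (v (m + j)))\<^sup>2)"
      by (rule fin_bound)
    also have "(\<Sum>j<n - m. (norm (v (m + j)))\<^sup>2) = (\<Sum>k\<in>{m..<n}. (norm (v k))\<^sup>2)"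
      by (subst sum.atLeastLessThan_shift_0) (simp add: lessThan_atLeast0)
    also have "\<dots> < e\<^sup>2" using N[OF m, of n] by (simp add: sum_nonneg)
    finally show ?thesis using e by (simp add: power_less_imp_less_base)
  qed
  then show "\<exists>N. \<forall>m\<ge>N. \<forall>n. norm (\<Sum>k\<in>{m..<n}. Bn k (Cst (v k))) < e" by blast
qed

definition Gs :: "(nat \<Rightarrow> 'y) \<Rightarrow> 'u" where "Gs v = (\<Sum>n. Bn n (Cst (v n)))"

lemma Gs_adj:
  assumes v: "summable (\<lambda>n. (norm (v n))\<^sup>2)"
  shows "(\<lambda>n. cinner (Cop (An n u)) (v n)) sums cinner u (Gs v)"
  unfolding Gs_def CAn_adj
  by (rule bounded_linear.sums[OF bounded_linear_cinner_right summable_sums[OF summable_Gs[OF v]]])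

lemma sqs_shift: "summable (\<lambda>n. (norm (v n))\<^sup>2) \<Longrightarrow> summable (\<lambda>n. (norm (v (n + k)))\<^sup>2)"
  by (rule summable_ignore_initial_segment)

lemma sqs_Suc: "summable (\<lambda>n. (norm (v n))\<^sup>2) \<Longrightarrow> summable (\<lambda>n. (norm (v (Suc n)))\<^sup>2)"
  using sqs_shift[of v 1] by simp

lemma Gs_head:
  assumes v: "summable (\<lambda>n. (norm (v n))\<^sup>2)"
  shows "Gs v = Ws (v 0, Gs (\<lambda>n. v (Suc n)))"
proof -
  have "Gs v = Cst (v 0) + (\<Sum>n. Bn (Suc n) (Cst (v (Suc n))))"
    unfolding Gs_def using suminf_split_head[OF summable_Gs[OF v]] by simp
  also have "(\<Sum>n. Bn (Suc n) (Cst (v (Suc n)))) = (\<Sum>n. Ast (Bn n (Cst (v (Suc n)))))" by simp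
  also have "\<dots> = Ast (Gs (\<lambda>n. v (Suc n)))"
    unfolding Gs_def by (rule bounded_linear.suminf[OF bl_Ast summable_Gs[OF sqs_Suc[OF v]], symmetric])
  finally show ?thesis by (simp add: Ws_split)
qed

definition Qc :: bool where
  "Qc \<longleftrightarrow> (\<forall>y. D (y, 0) = 0) \<and> (\<forall>n y. D (0, Bn n (Cst y)) = 0)"

lemma bl_D0u: "bounded_linear (\<lambda>u. D (0, u))"
  by (rule bounded_linear_compose[OF bl_D bounded_linear_Pair[OF bounded_linear_zero bounded_linear_ident]])

lemma D_split: "D (y, u) = D (y, 0) + D (0, u)"
  using linear_add[OF lin_D, of "(y, 0)" "(0, u)"] by simp

lemma D_zero: "D 0 = 0" by (rule linear_0[OF lin_D])

lemma D0u_cscale: "D (0, cscale c x) = cscale c (D (0, x))"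
  using D_cscale[of c "(0, x)"] by (simp add: cscale_Pair)

lemma Q_Gs:
  assumes Q: Qc and v: "summable (\<lambda>n. (norm (v n))\<^sup>2)"
  shows "D (0, Gs v) = 0"
proof -
  have "D (0, Gs v) = (\<Sum>n. D (0, Bn n (Cst (v n))))"
    unfolding Gs_def by (rule bounded_linear.suminf[OF bl_D0u summable_Gs[OF v]])
  also have "\<dots> = 0" using Q by (simp add: Qc_def)
  finally show ?thesis .
qed

lemma Q_step:
  assumes Q: Qc and v: "summable (\<lambda>n. (norm (v n))\<^sup>2)"
  shows "Cop (Gs v) = v 0" "Aop (Gs v) = Gs (\<lambda>n. v (Suc n))"
proof -
  define p where "p = (v 0, Gs (\<lambda>n. v (Suc n)))"
  have "D p = 0"
    unfolding p_def using D_split[of "v 0" "Gs (\<lambda>n. v (Suc n))"] Q Q_Gs[OF Q sqs_Suc[OF v]] by (simp add: Qc_def)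
  then have "p - Kop p = 0" using D_sq[of p] D_zero by simp
  then have pK: "p = (w1 (Ws p), w2 (Ws p))" by (simp add: Kop_def)
  have Wp: "Ws p = Gs v" using Gs_head[OF v] by (simp add: p_def)
  have GF: "Gs v \<in> F" using Ws_in[of p] Wp by simp
  have "w1 (Gs v) = v 0" "w2 (Gs v) = Gs (\<lambda>n. v (Suc n))"
    using pK unfolding Wp by (simp_all add: p_def prod_eq_iff)
  then show "Cop (Gs v) = v 0" "Aop (Gs v) = Gs (\<lambda>n. v (Suc n))"
    by (simp_all add: Cop_def Aop_def proj_id[OF F GF])
qed

lemma Q_An:
  assumes Q: Qc and v: "summable (\<lambda>n. (norm (v n))\<^sup>2)"
  shows "An n (Gs v) = Gs (\<lambda>k. v (k + n))"
proof (induction n)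
  case 0 then show ?case by simp
next
  case (Suc n)
  have "An (Suc n) (Gs v) = Aop (Gs (\<lambda>k. v (k + n)))" by (simp add: Suc)
  also have "\<dots> = Gs (\<lambda>k. v (Suc k + n))" by (rule Q_step(2)[OF Q sqs_shift[OF v]])
  finally show ?case by simp
qed

lemma Q_CAn:
  assumes Q: Qc and v: "summable (\<lambda>n. (norm (v n))\<^sup>2)"
  shows "Cop (An n (Gs v)) = v n"
  using Q_step(1)[OF Q sqs_shift[OF v, of n]] Q_An[OF Q v, of n] by simp

end


context omg
begin

lemma Q_imp_coiso:
  assumes Q: Qc
  shows "h2_coisometry (\<lambda>u z. Phi22 F w1 w2 z u)"
proof -
  have 1: "\<forall>u. (\<lambda>z. Phi22 F w1 w2 z u) \<in> H2" by (simp add: G_H2)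
  have 2: "\<forall>u. \<forall>f\<in>H2. h2_inner (\<lambda>z. Phi22 F w1 w2 z u) f = cinner u (Gs (h2_coeffs f))"
  proof (intro allI ballI)
    fix u and f :: "complex \<Rightarrow> 'y" assume "f \<in> H2"
    then obtain a where a: "summable (\<lambda>n. (norm (a n))\<^sup>2)" "h2_coeffs f = a" by (rule H2_elim)
    show "h2_inner (\<lambda>z. Phi22 F w1 w2 z u) f = cinner u (Gs (h2_coeffs f))"
      unfolding h2_inner_def h2c_G a(2) by (rule sums_unique[OF Gs_adj[OF a(1)], symmetric])
  qed
  have 3: "\<forall>f\<in>H2. \<forall>z\<in>ball 0 1. Phi22 F w1 w2 z (Gs (h2_coeffs f)) = f z"
  proof (intro ballI)
    fix f :: "complex \<Rightarrow> 'y" and z :: complex assume fH: "f \<in> H2" and z: "z \<in> ball 0 1"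
    from fH obtain a where a: "summable (\<lambda>n. (norm (a n))\<^sup>2)"
      "\<And>z. cmod z < 1 \<Longrightarrow> (\<lambda>n. cscale (z ^ n) (a n)) sums f z" "h2_coeffs f = a" by (rule H2_elim) blast
    have zz: "cmod z < 1" using z by simp
    have "(\<lambda>n. cscale (z ^ n) (Cop (An n (Gs a)))) sums Phi22 F w1 w2 z (Gs a)"
      by (rule Phi22_sums[OF zz])
    then have "(\<lambda>n. cscale (z ^ n) (a n)) sums Phi22 F w1 w2 z (Gs a)"
      by (simp add: Q_CAn[OF Q a(1)])
    then show "Phi22 F w1 w2 z (Gs (h2_coeffs f)) = f z"
      using a(2)[OF zz] a(3) sums_unique2 by blast
  qed
  show ?thesis unfolding h2_coisometry_def
    by (intro conjI exI[where x="\<lambda>f. Gs (h2_coeffs f)"]) (use 1 2 3 in auto)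
qed

lemma coiso_mono:
  assumes S: "\<And>u f. f \<in> H2 \<Longrightarrow> h2_inner (\<lambda>z. Phi22 F w1 w2 z u) f = cinner u (S f)"
    and SG: "\<And>f z. f \<in> H2 \<Longrightarrow> z \<in> ball 0 1 \<Longrightarrow> Phi22 F w1 w2 z (S f) = f z"
  shows "norm (Bn m (Cst y)) = norm y"
proof -
  define e where "e n = (if n = m then y else 0)" for n
  define f where "f z = cscale (z ^ m) y" for z :: complex
  have es: "(\<lambda>n. cscale (z ^ n) (e n)) sums f z" for z
  proof -
    have "(\<lambda>n. if n = m then cscale (z ^ n) y else 0) sums cscale (z ^ m) y" by (rule sums_single)
    moreover have "(\<lambda>n. cscale (z ^ n) (e n)) = (\<lambda>n. if n = m then cscale (z ^ n) y else 0)"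
      by (auto simp: e_def)
    ultimately show ?thesis by (simp add: f_def)
  qed
  have esq: "summable (\<lambda>n. (norm (e n))\<^sup>2)"
  proof -
    have "(\<lambda>n. if n = m then (norm y)\<^sup>2 else 0) sums (norm y)\<^sup>2" by (rule sums_single)
    moreover have "(\<lambda>n. (norm (e n))\<^sup>2) = (\<lambda>n. if n = m then (norm y)\<^sup>2 else 0)" by (auto simp: e_def)
    ultimately show ?thesis using sums_summable by metis
  qed
  have fH: "f \<in> H2" by (rule H2_intro[OF esq]) (rule es)
  have fc: "h2_coeffs f = e" by (rule h2_coeffs_eq) (rule es)
  have single: "(\<Sum>n. cinner (a n) (e n)) = cinner (a m) y" for a :: "nat \<Rightarrow> 'y"
  proof -
    have "(\<lambda>n. if n = m then cinner (a n) y else 0) sums cinner (a m) y" by (rule sums_single)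
    moreover have "(\<lambda>n. cinner (a n) (e n)) = (\<lambda>n. if n = m then cinner (a n) y else 0)"
      by (auto simp: e_def)
    ultimately show ?thesis using sums_unique by metis
  qed
  have "cinner u (S f) = cinner u (Bn m (Cst y))" for u
  proof -
    have "cinner u (S f) = h2_inner (\<lambda>z. Phi22 F w1 w2 z u) f" using S[OF fH] by simp
    also have "\<dots> = cinner (Cop (An m u)) y" unfolding h2_inner_def h2c_G fc by (rule single)
    also have "\<dots> = cinner u (Bn m (Cst y))" by (rule CAn_adj)
    finally show ?thesis .
  qed
  then have "cinner (S f - Bn m (Cst y)) (S f - Bn m (Cst y)) = 0"
    by (simp add: cinner_diff_right)
  then have Sf: "S f = Bn m (Cst y)" by (simp add: cinner_self_eq_0)
  have gc: "h2_coeffs (\<lambda>z. Phi22 F w1 w2 z (S f)) = e"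
  proof (rule h2_coeffs_eq)
    fix z :: complex assume "cmod z < 1"
    then have "Phi22 F w1 w2 z (S f) = f z" using SG[OF fH] by simp
    then show "(\<lambda>n. cscale (z ^ n) (e n)) sums Phi22 F w1 w2 z (S f)" using es by simp
  qed
  have "cinner (S f) (S f) = h2_inner (\<lambda>z. Phi22 F w1 w2 z (S f)) f" using S[OF fH] by simp
  also have "\<dots> = cinner (e m) y" unfolding h2_inner_def gc fc by (rule single)
  also have "\<dots> = cinner y y" by (simp add: e_def)
  finally have "Re (cinner (S f) (S f)) = Re (cinner y y)" by (rule arg_cong)
  then have "(norm (S f))\<^sup>2 = (norm y)\<^sup>2" by (simp add: Re_cinner_self)
  then show ?thesis using Sf by (simp add: power2_eq_iff_nonneg)
qed

lemma coiso_imp_Q: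
  assumes "h2_coisometry (\<lambda>u z. Phi22 F w1 w2 z u)"
  shows Qc
proof -
  from assms obtain S where
    S: "\<And>u f. f \<in> H2 \<Longrightarrow> h2_inner (\<lambda>z. Phi22 F w1 w2 z u) f = cinner u (S f)" and
    SG: "\<And>f z. f \<in> H2 \<Longrightarrow> z \<in> ball 0 1 \<Longrightarrow> Phi22 F w1 w2 z (S f) = f z"
    unfolding h2_coisometry_def by blast
  note mono = coiso_mono[OF S SG]
  have 1: "D (y, 0) = 0" for y
  proof -
    have "(norm (Ws (y, 0)))\<^sup>2 + (norm (D (y, 0)))\<^sup>2 = (norm (y, 0::'u))\<^sup>2" by (rule D_norm_id)
    moreover have "norm (Ws (y, 0)) = norm y" using mono[of 0 y] by (simp add: Cst_def)
    ultimately have "(norm (D (y, 0)))\<^sup>2 = 0" by simp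
    then show ?thesis by simp
  qed
  have 2: "D (0, Bn n (Cst y)) = 0" for n y
  proof -
    define x where "x = Bn n (Cst y)"
    have "(norm (Ws (0, x)))\<^sup>2 + (norm (D (0, x)))\<^sup>2 = (norm (0::'y, x))\<^sup>2" by (rule D_norm_id)
    moreover have "norm (Ws (0, x)) = norm y" using mono[of "Suc n" y] by (simp add: Ast_def x_def)
    moreover have "norm x \<le> norm y" unfolding x_def using Bn_norm Cst_norm order_trans by blast
    then have "(norm x)\<^sup>2 \<le> (norm y)\<^sup>2" by (intro power_mono) auto
    ultimately have "(norm y)\<^sup>2 + (norm (D (0, x)))\<^sup>2 = (norm x)\<^sup>2" "(norm x)\<^sup>2 \<le> (norm y)\<^sup>2" by simp_all
    then have "(norm (D (0, x)))\<^sup>2 \<le> 0" by linarith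
    then show ?thesis by (simp add: x_def)
  qed
  show Qc unfolding Qc_def using 1 2 by blast
qed

definition gw :: "complex \<Rightarrow> 'y \<Rightarrow> 'u" where "gw w y = (\<Sum>n. cscale (w ^ n) (Bn n (Cst y)))"

lemma summable_gw: "cmod w < 1 \<Longrightarrow> summable (\<lambda>n. cscale (w ^ n) (Bn n (Cst y)))"
proof (rule summable_comparison_test'[where g="\<lambda>n. cmod w ^ n * norm y" and N=0])
  assume "cmod w < 1"
  then show "summable (\<lambda>n. cmod w ^ n * norm y)" by (intro summable_mult2 summable_geometric) simp
  show "norm (cscale (w ^ n) (Bn n (Cst y))) \<le> cmod w ^ n * norm y" for n
  proof -
    have "norm (Bn n (Cst y)) \<le> norm y" using Bn_norm Cst_norm order_trans by blast
    then show ?thesis by (simp add: norm_cscale norm_power mult_left_mono)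
  qed
qed

lemma Cop_Nz_inner:
  assumes z: "cmod z < 1"
  shows "cinner (Cop (Nz z v)) y = cinner v (gw (cnj z) y)"
proof -
  have "(\<lambda>n. cinner (cscale (z ^ n) (Cop (An n v))) y) sums cinner (Cop (Nz z v)) y"
    using bounded_linear.sums[OF bounded_linear_cinner_left bounded_linear.sums[OF bl_Cop Nz_sums[OF z, of v]]]
    by (simp add: Cop_cscale)
  moreover have "(\<lambda>n. cinner v (cscale (cnj z ^ n) (Bn n (Cst y)))) sums cinner v (gw (cnj z) y)"
    unfolding gw_def
    by (rule bounded_linear.sums[OF bounded_linear_cinner_right summable_sums[OF summable_gw]]) (use z in simp)
  moreover have "cinner (cscale (z ^ n) (Cop (An n v))) y = cinner v (cscale (cnj z ^ n) (Bn n (Cst y)))" for n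
    by (simp add: cinner_cscale_left cinner_cscale_right CAn_adj)
  ultimately show ?thesis using sums_unique2 by simp
qed

lemma Phi21_inner:
  assumes z: "cmod z < 1"
  shows "cinner (Phi21 F w1 w2 z p) y = cinner p (D (y, cscale (cnj z) (gw (cnj z) y)))"
proof -
  have "Phi21 F w1 w2 z p = fst (D p) + cscale z (Cop (Nz z (snd (D p))))"
    by (simp add: Phi21_def resolv_eq[OF z] Cop_def)
  then have "cinner (Phi21 F w1 w2 z p) y = cinner (fst (D p)) y + cnj z * cinner (snd (D p)) (gw (cnj z) y)"
    by (simp add: cinner_add_left cinner_cscale_left Cop_Nz_inner[OF z])
  also have "\<dots> = cinner (D p) (y, cscale (cnj z) (gw (cnj z) y))"
    by (simp add: cinner_prod_def cinner_cscale_right)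
  also have "\<dots> = cinner p (D (y, cscale (cnj z) (gw (cnj z) y)))" by (simp add: D_selfadj)
  finally show ?thesis .
qed

definition cQ :: "'y \<Rightarrow> nat \<Rightarrow> 'y \<times> 'u" where
  "cQ y n = (case n of 0 \<Rightarrow> D (y, 0) | Suc k \<Rightarrow> D (0, Bn k (Cst y)))"

lemma X_sums:
  assumes w: "cmod w < 1"
  shows "(\<lambda>n. cscale (w ^ n) (cQ y n)) sums D (y, cscale w (gw w y))"
proof -
  have "(\<lambda>n. D (0, cscale (w ^ n) (Bn n (Cst y)))) sums D (0, gw w y)"
    unfolding gw_def by (rule bounded_linear.sums[OF bl_D0u summable_sums[OF summable_gw[OF w]]])
  then have "(\<lambda>n. cscale w (D (0, cscale (w ^ n) (Bn n (Cst y))))) sums cscale w (D (0, gw w y))"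
    by (rule bounded_linear.sums[OF bounded_linear_cscale])
  then have "(\<lambda>n. cscale (w ^ Suc n) (cQ y (Suc n))) sums D (0, cscale w (gw w y))"
    by (simp add: D0u_cscale cscale_cscale cQ_def)
  then have "(\<lambda>n. cscale (w ^ n) (cQ y n)) sums (D (0, cscale w (gw w y)) + cscale (w ^ 0) (cQ y 0))"
    by (subst sums_Suc_iff[symmetric]) simp
  also have "D (0, cscale w (gw w y)) + cscale (w ^ 0) (cQ y 0) = D (y, cscale w (gw w y))"
    using D_split[of y "cscale w (gw w y)"] by (simp add: cQ_def cscale_one add.commute)
  finally show ?thesis .
qed

lemma Q_iff_cQ: "Qc \<longleftrightarrow> (\<forall>y n. cQ y n = 0)"
  unfolding Qc_def cQ_def by (auto split: nat.splits)

lemma Q_imp_rhs: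
  assumes Q: Qc
  shows "\<forall>z\<in>ball 0 1. \<forall>p\<in>closure (range D). Phi21 F w1 w2 z p = 0"
proof (intro ballI)
  fix z :: complex and p assume "z \<in> ball 0 1"
  then have z: "cmod z < 1" by simp
  have "D (y, cscale (cnj z) (gw (cnj z) y)) = 0" for y
  proof -
    have "(\<lambda>n. cscale (cnj z ^ n) (cQ y n)) sums D (y, cscale (cnj z) (gw (cnj z) y))"
      by (rule X_sums) (use z in simp)
    then show ?thesis using Q Q_iff_cQ sums_unique2[OF _ sums_zero] by simp
  qed
  then have "cinner (Phi21 F w1 w2 z p) y = 0" for y by (simp add: Phi21_inner[OF z])
  from this[of "Phi21 F w1 w2 z p"] show "Phi21 F w1 w2 z p = 0" by (simp add: cinner_self_eq_0)
qed

lemma rhs_imp_Q: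
  assumes R: "\<forall>z\<in>ball 0 1. \<forall>p\<in>closure (range D). Phi21 F w1 w2 z p = 0"
  shows Qc
proof -
  have "cQ y = (\<lambda>_. 0)" for y
  proof (rule vec_powser_zero)
    fix w :: complex assume w: "cmod w < 1"
    define X where "X = D (y, cscale w (gw w y))"
    have zb: "cnj w \<in> ball 0 1" using w by simp
    have Xc: "X \<in> closure (range D)" unfolding X_def by (rule closure_subset[THEN subsetD]) simp
    have "0 = cinner (Phi21 F w1 w2 (cnj w) X) y" using R zb Xc by simp
    also have "\<dots> = cinner X X" using Phi21_inner[of "cnj w" X y] w by (simp add: X_def)
    finally have "X = 0" by (simp add: cinner_self_eq_0)
    then show "(\<lambda>n. cscale (w ^ n) (cQ y n)) sums 0" using X_sums[OF w, of y] by (simp add: X_def)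
  qed
  then show Qc unfolding Q_iff_cQ by (simp add: fun_eq_iff)
qed

end

theorem corollary1p4:
  fixes F :: "'u::chilbert_space set"
    and w1 :: "'u \<Rightarrow> 'y::chilbert_space"
    and w2 :: "'u \<Rightarrow> 'u"
  assumes "closed_csubspace F"
    and "contraction_on F w1 w2"
  shows "h2_coisometry (\<lambda>u z. Phi22 F w1 w2 z u) \<longleftrightarrow>
         (\<forall>z\<in>ball 0 1. \<forall>p\<in>closure (range (Dstar F w1 w2)). Phi21 F w1 w2 z p = 0)"
proof -
  interpret omg F w1 w2 using assms by unfold_locales
  show ?thesis using Q_imp_coiso coiso_imp_Q Q_imp_rhs rhs_imp_Q by blast
qed


end
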